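(* Let $R$ be a semistandard cylindric tableau and $S$ a set of boxes satisfying the input conditions of full multi-insertion, and let $G$ and $H$ be two bumping routes created when $\operatorname{FullMulti}(R,S)$ is performed, with $G_1<H_1$ (the first points, compared in the order $\le$ on points). Then for every plane row $r$ such that both $G(r)$ and $H(r)$ are defined, $H(r)$ is strictly to the left of $G(r)$, and the event that extended $G$ to include $G(r)$ occurred after the event that extended $H$ to include $H(r)$.
   Context: Fix integers $n>k\ge1$. A cylindric partition is a weakly decreasing integer sequence $(\lambda_m)_{m\in\mathbb Z}$ with $\lambda_m=\lambda_{m+k}+n-k$. A point $(x,y)\in\mathbb Z^2$ is in plane row $x$ and plane column $y$ and lies in $\lambda$ if $y\le\lambda_x$; a point $(x,y)$ is strictly left of $(x,y')$ if $y<y'$. Total order on points: $(x_1,y_1)\le(x_2,y_2)$ iff $x_1<x_2$, or $x_1=x_2$ and $y_1\ge y_2$. Boxes are classes of points modulo translation by multiples of $(-k,n-k)$; $\pi$ is the projection; row $x$ of the cylinder is the image of plane row $x$ (indexed mod $k$), column $y$ the image of plane column $y$; for a box $B$ in row $\pi(s)$, $\pi^{-1}_s(B)$ is its representative in plane row $s$. Within a row, boxes are ordered left to right by $y$-coordinates of representatives in a fixed plane row. $\mu\subseteq\lambda$ means $\mu_m\le\lambda_m$ for all $m$. A (semistandard cylindric) tableau of shape $\lambda/\mu$ is a map from the boxes in $\lambda$ but not $\mu$ to a totally ordered alphabet, weakly increasing along plane rows and strictly increasing down plane columns; its shapes are part of its data. Full multi-insertion $\operatorname{FullMulti}(R,S)$: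 input a tableau $R$ with outer shape $\lambda$, inner shape $\mu$, and a set $S$ of boxes not in $\mu$, no two in the same column, such that $\mu$ plus $S$ is a cylindric partition. Choose an integer $r_0$. For $h=r_0,\dots,r_0+k-1$, go through the boxes of $S$ in row $h$ from left to right: if the box is in $\lambda$, remove its entry $x$ and append $(x,h+1)$ to a queue $q_0$; otherwise add the box to $\lambda$. All boxes of $S$ are added to the inner shape. Then, while the current queue $q$ is nonempty: start an empty queue $q'$; remove pairs $(x,s)$ from the front of $q$ one at a time; if $x$ is $\ge$ every entry in row $s$, put $x$ into the leftmost box of row $s$ not in the current outer shape and add it to the outer shape; otherwise replace the leftmost entry $x'$ of row $s$ greater than $x$ by $x$ and append $(x',s+1)$ to $q'$; when $q$ is exhausted set $q:=q'$. These actions happen one after another and thus are totally ordered in time. Bumping route of a point $P$ with $\pi(P)\in S$ in plane row $s_0$: a list of points starting with $P$ (added at the moment $\pi(P)$ is processed in the removal phase). If $\pi(P)$ was in $\lambda$, the pair created from its entry is tracked; whenever the tracked pair is processed and its letter is placed into a box $B$, the point $\pi^{-1}_s(B)$ is appended (this placement is the event extending the route), where $s$ is one more than the plane row of the previously appended point; if an entry $x'$ was displaced, the new pair $(x',\cdot)$ becomes tracked. For a route $H$, $H_1$ is its first point and $H(r)$ is its point in plane row $r$, if any. *)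

theory Defs
  imports Main
begin

type_synonym pt = "int \<times> int"
type_synonym box = "(int \<times> int) set"

definition shift :: "nat \<Rightarrow> nat \<Rightarrow> int \<Rightarrow> pt \<Rightarrow> pt" where
  "shift n k j p = (fst p - j * int k, snd p + j * (int n - int k))"

definition proj :: "nat \<Rightarrow> nat \<Rightarrow> pt \<Rightarrow> box" where
  "proj n k p = {shift n k j p | j. True}"

definition cyl :: "nat \<Rightarrow> nat \<Rightarrow> (int \<Rightarrow> int) \<Rightarrow> bool" where
  "cyl n k lam \<longleftrightarrow> (\<forall>m. lam (m + 1) \<le> lam m) \<and> (\<forall>m. lam m = lam (m + int k) + (int n - int k))"

definition pt_in :: "(int \<Rightarrow> int) \<Rightarrow> pt \<Rightarrow> bool" where
  "pt_in lam p \<longleftrightarrow> snd p \<le> lam (fst p)"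

definition box_in :: "(int \<Rightarrow> int) \<Rightarrow> box \<Rightarrow> bool" where
  "box_in lam B \<longleftrightarrow> (\<exists>p\<in>B. pt_in lam p)"

definition in_col :: "box \<Rightarrow> int \<Rightarrow> bool" where
  "in_col B y \<longleftrightarrow> (\<exists>p\<in>B. snd p = y)"

definition pt_less :: "pt \<Rightarrow> pt \<Rightarrow> bool" where
  "pt_less p q \<longleftrightarrow> (fst p < fst q \<or> (fst p = fst q \<and> snd p \<ge> snd q)) \<and> p \<noteq> q"

definition in_skew :: "(int \<Rightarrow> int) \<Rightarrow> (int \<Rightarrow> int) \<Rightarrow> pt \<Rightarrow> bool" where
  "in_skew lam mu p \<longleftrightarrow> pt_in lam p \<and> \<not> pt_in mu p"

text \<open>Semistandard cylindric tableau of shape lam/mu; entries are given by a map on boxes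
  (values outside lam/mu are irrelevant).\<close>
definition ssyt :: "nat \<Rightarrow> nat \<Rightarrow> (int \<Rightarrow> int) \<Rightarrow> (int \<Rightarrow> int) \<Rightarrow> (box \<Rightarrow> 'a::linorder) \<Rightarrow> bool" where
  "ssyt n k lam mu T \<longleftrightarrow> cyl n k lam \<and> cyl n k mu \<and> (\<forall>m. mu m \<le> lam m) \<and>
     (\<forall>x y. in_skew lam mu (x, y) \<and> in_skew lam mu (x, y + 1) \<longrightarrow>
            T (proj n k (x, y)) \<le> T (proj n k (x, y + 1))) \<and>
     (\<forall>x y. in_skew lam mu (x, y) \<and> in_skew lam mu (x + 1, y) \<longrightarrow>
            T (proj n k (x, y)) < T (proj n k (x + 1, y)))"

definition multi_input :: "nat \<Rightarrow> nat \<Rightarrow> (int \<Rightarrow> int) \<Rightarrow> box set \<Rightarrow> bool" where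
  "multi_input n k mu S \<longleftrightarrow>
     (\<forall>B\<in>S. B \<in> range (proj n k) \<and> \<not> box_in mu B) \<and>
     (\<forall>B1\<in>S. \<forall>B2\<in>S. B1 \<noteq> B2 \<longrightarrow> \<not> (\<exists>y. in_col B1 y \<and> in_col B2 y)) \<and>
     (\<exists>nu. cyl n k nu \<and> (\<forall>p. pt_in nu p \<longleftrightarrow> pt_in mu p \<or> proj n k p \<in> S))"

definition add_box :: "(int \<Rightarrow> int) \<Rightarrow> box \<Rightarrow> (int \<Rightarrow> int)" where
  "add_box lam B = (\<lambda>m. if (\<exists>y. (m, y) \<in> B) then max (lam m) (THE y. (m, y) \<in> B) else lam m)"

text \<open>Queue pairs carry, besides letter and row, a tag: the point (in the plane row of
  the removal phase) of the box of S whose route tracks the pair.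
  The log records every route-extending event in chronological order as (tag, point);
  the position in the log is the time of the event.\<close>
record 'a fm_state =
  st_outer :: "int \<Rightarrow> int"
  st_inner :: "int \<Rightarrow> int"
  st_ent :: "box \<Rightarrow> 'a"
  st_todo :: "pt list"
  st_q :: "('a \<times> int \<times> pt) list"
  st_q' :: "('a \<times> int \<times> pt) list"
  st_log :: "(pt \<times> pt) list"

definition fm_init :: "nat \<Rightarrow> nat \<Rightarrow> (int \<Rightarrow> int) \<Rightarrow> (int \<Rightarrow> int) \<Rightarrow> (box \<Rightarrow> 'a)
    \<Rightarrow> box set \<Rightarrow> int \<Rightarrow> 'a fm_state" where
  "fm_init n k lam mu T S r0 =
    \<lparr> st_outer = lam, st_inner = mu, st_ent = T,
      st_todo = concat (map (\<lambda>h. map (\<lambda>y. (h, y)) (sorted_list_of_set {y. proj n k (h, y) \<in> S}))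
                            [r0..r0 + int k - 1]),
      st_q = [], st_q' = [], st_log = [] \<rparr>"

definition fm_step :: "nat \<Rightarrow> nat \<Rightarrow> 'a::linorder fm_state \<Rightarrow> 'a fm_state" where
  "fm_step n k \<sigma> =
    (case st_todo \<sigma> of
      p # rest \<Rightarrow>
        (let B = proj n k p; h = fst p in
          if snd p \<le> st_outer \<sigma> h then
            \<sigma>\<lparr> st_todo := rest, st_q := st_q \<sigma> @ [(st_ent \<sigma> B, h + 1, p)],
               st_inner := add_box (st_inner \<sigma>) B, st_log := st_log \<sigma> @ [(p, p)] \<rparr>
          else
            \<sigma>\<lparr> st_todo := rest, st_outer := add_box (st_outer \<sigma>) B,
               st_inner := add_box (st_inner \<sigma>) B, st_log := st_log \<sigma> @ [(p, p)] \<rparr>)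
    | [] \<Rightarrow>
      (case st_q \<sigma> of
        (x, s, tag) # rest \<Rightarrow>
          (if (\<forall>y. st_inner \<sigma> s < y \<and> y \<le> st_outer \<sigma> s \<longrightarrow> st_ent \<sigma> (proj n k (s, y)) \<le> x) then
             (let y0 = st_outer \<sigma> s + 1 in
               \<sigma>\<lparr> st_q := rest, st_outer := add_box (st_outer \<sigma>) (proj n k (s, y0)),
                  st_ent := (st_ent \<sigma>)(proj n k (s, y0) := x),
                  st_log := st_log \<sigma> @ [(tag, (s, y0))] \<rparr>)
           else
             (let y0 = (LEAST y. st_inner \<sigma> s < y \<and> y \<le> st_outer \<sigma> s \<and> x < st_ent \<sigma> (proj n k (s, y)));
                  x' = st_ent \<sigma> (proj n k (s, y0)) in
               \<sigma>\<lparr> st_q := rest, st_ent := (st_ent \<sigma>)(proj n k (s, y0) := x),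
                  st_q' := st_q' \<sigma> @ [(x', s + 1, tag)],
                  st_log := st_log \<sigma> @ [(tag, (s, y0))] \<rparr>))
      | [] \<Rightarrow> \<sigma>\<lparr> st_q := st_q' \<sigma>, st_q' := [] \<rparr>))"

text \<open>State after i steps (once the algorithm has finished, steps do nothing).\<close>
definition fm_run :: "nat \<Rightarrow> nat \<Rightarrow> (int \<Rightarrow> int) \<Rightarrow> (int \<Rightarrow> int) \<Rightarrow> (box \<Rightarrow> 'a::linorder)
    \<Rightarrow> box set \<Rightarrow> int \<Rightarrow> nat \<Rightarrow> 'a fm_state" where
  "fm_run n k lam mu T S r0 i = (fm_step n k ^^ i) (fm_init n k lam mu T S r0)"

text \<open>Bumping route of the point P (with proj P in S), read off an event log: the list of
  its points, each paired with the time of the event that appended it. The log stores the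
  route of the representative of the box in the removal-phase plane row; the route of P is
  its translate.\<close>
definition route :: "nat \<Rightarrow> nat \<Rightarrow> (pt \<times> pt) list \<Rightarrow> pt \<Rightarrow> (pt \<times> nat) list" where
  "route n k L P =
    [((fst q + fst P - fst tag, snd q + snd P - snd tag), t).
       (t, tag, q) \<leftarrow> zip [0..<length L] L, proj n k tag = proj n k P]"

end

theory Submission
  imports Defs "HOL-Library.Product_Lexorder"
begin

locale cy = fixes n k :: nat and r0 :: int assumes k1: "1 \<le> k"
begin

abbreviation kk :: int where "kk \<equiv> int k"
abbreviation dd :: int where "dd \<equiv> int n - int k"

definition cg :: "int \<Rightarrow> int \<Rightarrow> bool" where "cg s t \<longleftrightarrow> kk dvd (s - t)"
definition cs :: "int \<Rightarrow> pt \<Rightarrow> int" where "cs s p = snd p + ((fst p - s) div kk) * dd"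
definition per :: "(int \<Rightarrow> int) \<Rightarrow> bool" where "per f \<longleftrightarrow> (\<forall>m. f (m + kk) = f m - dd)"

lemma kpos: "kk > 0" using k1 by simp

lemma cg_refl[simp]: "cg s s" by (simp add: cg_def)
lemma cg_sym: "cg s t \<Longrightarrow> cg t s"
  unfolding cg_def by (metis dvd_minus_iff minus_diff_eq)
lemma cg_trans: "cg s t \<Longrightarrow> cg t u \<Longrightarrow> cg s u"
proof -
  assume "cg s t" "cg t u"
  hence "kk dvd ((s - t) + (t - u))" unfolding cg_def by (rule dvd_add)
  thus ?thesis by (simp add: cg_def)
qed
lemma cg_plus1: "cg (s+1) (t+1) \<longleftrightarrow> cg s t" by (simp add: cg_def)
lemma cg_minus1: "cg s (t - 1) \<longleftrightarrow> cg (s+1) t" by (simp add: cg_def algebra_simps)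

lemma cg_ex: "cg s t \<longleftrightarrow> (\<exists>j. t = s + j * kk)"
proof
  assume "cg s t"
  then obtain j where "s - t = kk * j" unfolding cg_def by blast
  hence "t = s + (-j) * kk" by (simp add: algebra_simps)
  thus "\<exists>j. t = s + j * kk" by blast
next
  assume "\<exists>j. t = s + j * kk"
  then obtain j where "t = s + j * kk" by blast
  hence "s - t = kk * (-j)" by (simp add: algebra_simps)
  thus "cg s t" unfolding cg_def by (rule dvdI)
qed

lemma cg_div: "cg s t \<Longrightarrow> t = s + ((t - s) div kk) * kk"
proof -
  assume "cg s t"
  then obtain j where j: "t = s + j * kk" using cg_ex by blast
  hence "(t - s) div kk = j" using kpos by simp
  thus ?thesis using j by simp
qed

lemma shift_shift: "shift n k i (shift n k j p) = shift n k (i + j) p"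
  by (simp add: shift_def algebra_simps)

lemma mem_proj: "(a, b) \<in> proj n k p \<longleftrightarrow> cg a (fst p) \<and> b = cs a p"
proof
  assume "(a,b) \<in> proj n k p"
  then obtain j where "(a,b) = shift n k j p" by (auto simp: proj_def)
  hence a: "a = fst p - j * kk" and b: "b = snd p + j * dd" by (auto simp: shift_def)
  have "cg a (fst p)" using a cg_ex by (metis add.commute diff_add_cancel)
  moreover have "(fst p - a) div kk = j" using a kpos by simp
  ultimately show "cg a (fst p) \<and> b = cs a p" using b by (simp add: cs_def)
next
  assume h: "cg a (fst p) \<and> b = cs a p"
  define j where "j = (fst p - a) div kk"
  have "fst p = a + j * kk" using cg_div h j_def by blast
  hence "(a,b) = shift n k j p" using h by (simp add: shift_def cs_def j_def)
  thus "(a,b) \<in> proj n k p" by (auto simp: proj_def)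
qed

lemma proj_self: "p \<in> proj n k p"
proof -
  have "p = shift n k 0 p" by (simp add: shift_def)
  thus ?thesis by (auto simp: proj_def)
qed

lemma proj_mem_eq: "q \<in> proj n k p \<Longrightarrow> proj n k q = proj n k p"
proof -
  assume "q \<in> proj n k p"
  then obtain j where q: "q = shift n k j p" by (auto simp: proj_def)
  show ?thesis
  proof
    show "proj n k q \<subseteq> proj n k p"
      using q by (auto simp: proj_def shift_shift) 
  next
    show "proj n k p \<subseteq> proj n k q"
    proof
      fix x assume "x \<in> proj n k p"
      then obtain i where "x = shift n k i p" by (auto simp: proj_def)
      hence "x = shift n k (i - j) q" using q by (simp add: shift_shift)
      thus "x \<in> proj n k q" by (auto simp: proj_def)
    qed
  qed
qed

lemma proj_eq: "proj n k (s, y) = proj n k p \<longleftrightarrow> cg s (fst p) \<and> y = cs s p"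
proof
  assume "proj n k (s, y) = proj n k p"
  hence "(s,y) \<in> proj n k p" using proj_self by metis
  thus "cg s (fst p) \<and> y = cs s p" using mem_proj by blast
next
  assume "cg s (fst p) \<and> y = cs s p"
  hence "(s,y) \<in> proj n k p" using mem_proj by blast
  thus "proj n k (s, y) = proj n k p" by (rule proj_mem_eq)
qed

lemma add_box_proj: "add_box f (proj n k p) m = (if cg m (fst p) then max (f m) (cs m p) else f m)"
proof (cases "cg m (fst p)")
  case True
  have ex: "\<exists>y. (m, y) \<in> proj n k p" using True mem_proj by blast
  have "(THE y. (m, y) \<in> proj n k p) = cs m p"
    by (rule the_equality) (auto simp: mem_proj True)
  thus ?thesis using ex True by (simp add: add_box_def)
next
  case False
  thus ?thesis by (auto simp: add_box_def mem_proj)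
qed

lemma per_shift_j: "per f \<Longrightarrow> f (m + j * kk) = f m - j * dd"
proof (induction j rule: int_induct[where k=0])
  case base thus ?case by simp
next
  case (step1 i)
  have "f (m + (i+1) * kk) = f ((m + i * kk) + kk)" by (simp add: algebra_simps)
  also have "\<dots> = f (m + i*kk) - dd" using step1.prems per_def by blast
  finally show ?case using step1 by (simp add: algebra_simps)
next
  case (step2 i)
  have "f (m + i * kk) = f ((m + (i - 1) * kk) + kk)" by (simp add: algebra_simps)
  also have "\<dots> = f (m + (i - 1)*kk) - dd" using step2.prems per_def by blast
  finally show ?case using step2 by (simp add: algebra_simps)
qed

lemma per_cg: "per f \<Longrightarrow> cg s t \<Longrightarrow> f s = f t + ((t - s) div kk) * dd"
  using per_shift_j[of f s "(t - s) div kk"] cg_div[of s t] by simp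

lemma cs_cg: "cg s t \<Longrightarrow> cg t (fst p) \<Longrightarrow> cs s p = cs t p + ((t - s) div kk) * dd"
proof -
  assume a: "cg s t" "cg t (fst p)"
  obtain i where i: "t = s + i * kk" using a cg_ex by blast
  obtain j where j: "fst p = t + j * kk" using a cg_ex by blast
  have "(fst p - s) div kk = i + j" using i j kpos by (simp add: algebra_simps)
  moreover have "(fst p - t) div kk = j" using j kpos by simp
  moreover have "(t - s) div kk = i" using i kpos by simp
  ultimately show ?thesis by (simp add: cs_def algebra_simps)
qed

lemma per_add_box: "per f \<Longrightarrow> per (add_box f (proj n k p))"
proof -
  assume pf: "per f"
  { fix m
    have "m + kk - fst p = (m - fst p) + kk" by simp
    hence c: "cg (m + kk) (fst p) = cg m (fst p)" unfolding cg_def by (simp only: dvd_add_triv_right_iff)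
    have "(fst p - (m + kk)) div kk = ((fst p - m) + (-1) * kk) div kk" by (simp add: algebra_simps)
    also have "\<dots> = (fst p - m) div kk - 1" using kpos by (subst div_mult_self1) auto
    finally have h: "(fst p - (m + kk)) div kk = (fst p - m) div kk - 1" .
    have cs1: "cs (m + kk) p = cs m p - dd" unfolding cs_def h by (simp add: left_diff_distrib)
    have "add_box f (proj n k p) (m + kk) = add_box f (proj n k p) m - dd"
      using pf c cs1 unfolding per_def by (cases "cg m (fst p)") (simp_all add: add_box_proj max_def) }
  thus ?thesis by (simp add: per_def)
qed


definition E :: "'a fm_state \<Rightarrow> int \<Rightarrow> int \<Rightarrow> 'a" where
  "E \<sigma> s y = st_ent \<sigma> (proj n k (s, y))"

definition lf :: "'a fm_state \<Rightarrow> int \<Rightarrow> int \<Rightarrow> bool" where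
  "lf \<sigma> s y \<longleftrightarrow> y \<le> st_inner \<sigma> s \<or> (\<exists>e\<in>set (st_log \<sigma>). cg s (fst (snd e)) \<and> y \<le> cs s (snd e))"

definition win :: "pt \<Rightarrow> bool" where "win p \<longleftrightarrow> r0 \<le> fst p \<and> fst p < r0 + kk"

lemma win_cg: "win a \<Longrightarrow> win b \<Longrightarrow> cg (fst a) (fst b) \<Longrightarrow> fst a = fst b"
proof -
  assume w: "win a" "win b" and c: "cg (fst a) (fst b)"
  then obtain j where j: "fst b = fst a + j * kk" using cg_ex by blast
  have "j = 0"
  proof (rule ccontr)
    assume "j \<noteq> 0"
    hence "j \<ge> 1 \<or> j \<le> -1" by linarith
    moreover have "j \<ge> 1 \<Longrightarrow> 1 * kk \<le> j * kk" using kpos by (intro mult_right_mono) auto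
    moreover have "j \<le> -1 \<Longrightarrow> j * kk \<le> (-1) * kk" using kpos by (intro mult_right_mono) auto
    ultimately have "j * kk \<ge> kk \<or> j * kk \<le> - kk" by auto
    thus False using w j unfolding win_def by linarith
  qed
  thus ?thesis using j by simp
qed

lemma E_cg: "cg s t \<Longrightarrow> E \<sigma> s y = E \<sigma> t (y - ((t - s) div kk) * dd)"
proof -
  assume c: "cg s t"
  have "proj n k (s, y) = proj n k (t, y - ((t - s) div kk) * dd)"
    using c by (simp add: proj_eq cs_def)
  thus ?thesis by (simp add: E_def)
qed

lemma lf_mono: "lf \<sigma> s y \<Longrightarrow> y' \<le> y \<Longrightarrow> lf \<sigma> s y'"
  unfolding lf_def by force

lemma lf_cg: "per (st_inner \<sigma>) \<Longrightarrow> cg s t \<Longrightarrow> lf \<sigma> s y \<longleftrightarrow> lf \<sigma> t (y - ((t - s) div kk) * dd)"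
proof -
  assume p: "per (st_inner \<sigma>)" and c: "cg s t"
  define j where "j = (t - s) div kk"
  have i: "st_inner \<sigma> s = st_inner \<sigma> t + j * dd" using per_cg[OF p c] j_def by simp
  have e: "\<And>q. cg s (fst q) \<longleftrightarrow> cg t (fst q)" using c cg_sym cg_trans by blast
  have cs: "\<And>q. cg t (fst q) \<Longrightarrow> cs s q = cs t q + j * dd" using cs_cg c j_def by blast
  have b: "(\<exists>e\<in>set (st_log \<sigma>). cg s (fst (snd e)) \<and> y \<le> cs s (snd e)) \<longleftrightarrow>
      (\<exists>e\<in>set (st_log \<sigma>). cg t (fst (snd e)) \<and> y - j * dd \<le> cs t (snd e))"
  proof (rule bex_cong[OF refl])
    fix e show "(cg s (fst (snd e)) \<and> y \<le> cs s (snd e)) \<longleftrightarrow> (cg t (fst (snd e)) \<and> y - j * dd \<le> cs t (snd e))"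
      using e[of "snd e"] cs[of "snd e"] by (cases "cg t (fst (snd e))") (simp_all add: diff_le_eq)
  qed
  have "y \<le> st_inner \<sigma> s \<longleftrightarrow> y - j*dd \<le> st_inner \<sigma> t" using i by linarith
  thus ?thesis unfolding lf_def j_def[symmetric] using b by blast
qed

lemma chain_mono:
  fixes g :: "int \<Rightarrow> 'b::order"
  assumes "\<And>y. lo < y \<Longrightarrow> y + 1 \<le> hi \<Longrightarrow> g y \<le> g (y+1)"
  shows "lo < a \<Longrightarrow> a \<le> b \<Longrightarrow> b \<le> hi \<Longrightarrow> g a \<le> g b"
proof (induction "nat (b - a)" arbitrary: b)
  case 0 thus ?case by simp
next
  case (Suc m)
  have ab: "a \<le> b - 1" using Suc.hyps(2) by linarith
  have m: "m = nat ((b - 1) - a)" using Suc.hyps(2) by linarith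
  have "g a \<le> g (b - 1)" using Suc.hyps(1)[OF m] Suc.prems ab by linarith
  also have "g (b - 1) \<le> g b" using assms[of "b - 1"] Suc.prems ab by simp
  finally show ?case .
qed


definition keyL :: "pt \<times> pt \<Rightarrow> int \<times> pt" where "keyL e = (fst (snd e) - fst (fst e), fst e)"
definition keyQ :: "'a \<times> int \<times> pt \<Rightarrow> int \<times> pt" where "keyQ a = (fst (snd a) - fst (snd (snd a)), snd (snd a))"
definition keyT :: "pt \<Rightarrow> int \<times> pt" where "keyT p = (0, p)"

abbreviation QQ :: "'a fm_state \<Rightarrow> ('a \<times> int \<times> pt) list" where "QQ \<sigma> \<equiv> st_q \<sigma> @ st_q' \<sigma>"

definition "J2 \<sigma> \<longleftrightarrow> (\<forall>s y. lf \<sigma> s y \<longrightarrow> y \<le> st_outer \<sigma> s)"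
definition "J3 \<sigma> \<longleftrightarrow> (\<forall>s y. st_inner \<sigma> s < y \<longrightarrow> y + 1 \<le> st_outer \<sigma> s \<longrightarrow> E \<sigma> s y \<le> E \<sigma> s (y+1))"
definition "J4 \<sigma> \<longleftrightarrow> (\<forall>a\<in>set (QQ \<sigma>). \<forall>s y. cg s (fst (snd a)) \<longrightarrow> st_inner \<sigma> s < y \<longrightarrow> lf \<sigma> s y \<longrightarrow> E \<sigma> s y \<le> fst a)"
definition "J5 \<sigma> \<longleftrightarrow> sorted_wrt (\<lambda>a b. cg (fst (snd a)) (fst (snd b)) \<longrightarrow> fst a \<le> fst b) (QQ \<sigma>)"
definition "J6 \<sigma> \<longleftrightarrow> (\<forall>s y y'. st_inner \<sigma> (s+1) < y \<longrightarrow> lf \<sigma> (s+1) y \<longrightarrow> \<not> lf \<sigma> s y' \<longrightarrow> y' \<le> st_outer \<sigma> s \<longrightarrow> E \<sigma> (s+1) y \<le> E \<sigma> s y')"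
definition "J7 \<sigma> \<longleftrightarrow> (\<forall>a\<in>set (QQ \<sigma>). \<forall>s y'. cg s (fst (snd a) - 1) \<longrightarrow> \<not> lf \<sigma> s y' \<longrightarrow> y' \<le> st_outer \<sigma> s \<longrightarrow> fst a \<le> E \<sigma> s y')"
definition "J8 \<sigma> \<longleftrightarrow> sorted_wrt (<) (map keyL (st_log \<sigma>) @ map keyT (st_todo \<sigma>) @ map keyQ (QQ \<sigma>))"
definition "J9 \<sigma> \<longleftrightarrow> (\<forall>p\<in>set (st_todo \<sigma>). \<not> lf \<sigma> (fst p) (snd p) \<and> win p)"
definition "J10 \<sigma> \<longleftrightarrow> (st_todo \<sigma> \<noteq> [] \<longrightarrow> st_q' \<sigma> = [] \<and> (\<forall>s y. lf \<sigma> s y \<longrightarrow> y \<le> st_inner \<sigma> s))"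
definition "J11 \<sigma> \<longleftrightarrow> (\<exists>R. (\<forall>a\<in>set (st_q \<sigma>). fst (keyQ a) = R) \<and> (\<forall>b\<in>set (st_q' \<sigma>). fst (keyQ b) = R + 1) \<and> (st_todo \<sigma> \<noteq> [] \<longrightarrow> R = 1))"
definition "J12 \<sigma> \<longleftrightarrow> (\<forall>a\<in>set (QQ \<sigma>). (fst (keyQ a) - 1, snd (keyQ a)) \<in> keyL ` set (st_log \<sigma>))"
definition "J13 \<sigma> \<longleftrightarrow> sorted_wrt (\<lambda>e1 e2. cg (fst (snd e1)) (fst (snd e2)) \<longrightarrow> cs (fst (snd e2)) (snd e1) < snd (snd e2)) (st_log \<sigma>)"
definition "J14 \<sigma> \<longleftrightarrow> (\<forall>e\<in>set (st_log \<sigma>). win (fst e))"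

definition "INV \<sigma> \<longleftrightarrow> per (st_inner \<sigma>) \<and> per (st_outer \<sigma>) \<and> J2 \<sigma> \<and> J3 \<sigma> \<and> J4 \<sigma> \<and> J5 \<sigma> \<and> J6 \<sigma> \<and> J7 \<sigma>
   \<and> J8 \<sigma> \<and> J9 \<sigma> \<and> J10 \<sigma> \<and> J11 \<sigma> \<and> J12 \<sigma> \<and> J13 \<sigma> \<and> J14 \<sigma>"

lemma rem_lam:
  fixes \<sigma> :: "'a::linorder fm_state"
  assumes I: "INV \<sigma>" and td: "st_todo \<sigma> = p # rest" and lc: "snd p \<le> st_outer \<sigma> (fst p)"
  shows "INV (fm_step n k \<sigma>)"
proof -
  define a where "a = (st_ent \<sigma> (proj n k p), fst p + 1, p)"
  define \<sigma>' where "\<sigma>' = \<sigma>\<lparr>st_todo := rest, st_q := st_q \<sigma> @ [a],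
      st_inner := add_box (st_inner \<sigma>) (proj n k p), st_log := st_log \<sigma> @ [(p,p)]\<rparr>"
  have step: "fm_step n k \<sigma> = \<sigma>'" using td lc by (simp add: fm_step_def Let_def \<sigma>'_def a_def)
  have pi: "per (st_inner \<sigma>)" and po: "per (st_outer \<sigma>)" and j2: "J2 \<sigma>" and j3: "J3 \<sigma>"
    and j5: "J5 \<sigma>" and j7: "J7 \<sigma>" and j8: "J8 \<sigma>" and j9: "J9 \<sigma>" and j10: "J10 \<sigma>"
    and j11: "J11 \<sigma>" and j12: "J12 \<sigma>" and j13: "J13 \<sigma>" and j14: "J14 \<sigma>"
    using I by (simp_all add: INV_def)
  define h where "h = fst p"
  define c where "c s = cs s p" for s
  have q'e: "st_q' \<sigma> = []" and lf10: "\<And>s y. lf \<sigma> s y \<Longrightarrow> y \<le> st_inner \<sigma> s"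
    using j10 td by (auto simp: J10_def)
  have lfold: "\<And>s y. lf \<sigma> s y \<longleftrightarrow> y \<le> st_inner \<sigma> s" using lf10 by (auto simp: lf_def)
  have nlf: "\<not> lf \<sigma> h (snd p)" and winp: "win p" using j9 td by (auto simp: J9_def h_def)
  have cgc: "\<not> lf \<sigma> s (c s) \<and> c s \<le> st_outer \<sigma> s" if cgs: "cg s h" for s
  proof -
    have cc: "c s = snd p + ((h - s) div kk) * dd" by (simp add: c_def cs_def h_def)
    have "lf \<sigma> s (c s) \<longleftrightarrow> lf \<sigma> h (snd p)" using lf_cg[OF pi cgs] cc by simp
    moreover have "st_outer \<sigma> s = st_outer \<sigma> h + ((h - s) div kk) * dd" using per_cg[OF po cgs] .
    ultimately show ?thesis using nlf lc cc h_def by simp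
  qed
  have inn: "st_inner \<sigma> s < c s" if "cg s h" for s using cgc[OF that] lfold by force
  have inner': "st_inner \<sigma>' s = (if cg s h then c s else st_inner \<sigma> s)" for s
    using inn[of s] by (cases "cg s h") (simp_all add: \<sigma>'_def add_box_proj h_def c_def max_def)
  have innle: "st_inner \<sigma> s \<le> st_inner \<sigma>' s" for s using inner' inn by (simp add: less_imp_le)
  have E': "E \<sigma>' = E \<sigma>" by (simp add: E_def \<sigma>'_def fun_eq_iff)
  have outer': "st_outer \<sigma>' = st_outer \<sigma>" by (simp add: \<sigma>'_def)
  have lfR: "lf \<sigma>' s y \<longleftrightarrow> y \<le> st_inner \<sigma>' s" for s y
  proof
    assume "lf \<sigma>' s y"
    then consider "y \<le> st_inner \<sigma>' s" | e where "e \<in> set (st_log \<sigma>)" "cg s (fst (snd e))" "y \<le> cs s (snd e)"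
      | "cg s h" "y \<le> c s"
      unfolding lf_def by (auto simp: \<sigma>'_def h_def c_def)
    thus "y \<le> st_inner \<sigma>' s"
    proof cases
      case 2
      hence "lf \<sigma> s (cs s (snd e))" unfolding lf_def by auto
      thus ?thesis using lf10 innle 2 by (meson order_trans)
    qed (use inner' in auto)
  qed (simp add: lf_def)
  have Ep: "st_ent \<sigma> (proj n k p) = E \<sigma> h (snd p)" by (simp add: E_def h_def)
  have Ecs: "E \<sigma> s (c s) = st_ent \<sigma> (proj n k p)" if "cg s h" for s
  proof -
    have "proj n k (s, c s) = proj n k p" using that proj_eq[of s "c s" p] by (simp add: c_def h_def)
    thus ?thesis by (simp add: E_def)
  qed
  have setQ: "set (QQ \<sigma>') = set (st_q \<sigma>) \<union> {a}" using q'e by (simp add: \<sigma>'_def)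
  have per': "per (st_inner \<sigma>')" "per (st_outer \<sigma>')" using pi po per_add_box by (simp_all add: \<sigma>'_def)
  have J2': "J2 \<sigma>'" unfolding J2_def
  proof (intro allI impI)
    fix s y assume "lf \<sigma>' s y"
    hence "y \<le> st_inner \<sigma>' s" using lfR by simp
    moreover have "st_inner \<sigma> s \<le> st_outer \<sigma> s" using j2 lfold unfolding J2_def by blast
    ultimately show "y \<le> st_outer \<sigma>' s" using inner'[of s] cgc[of s] outer' by (cases "cg s h") auto
  qed
  have J3': "J3 \<sigma>'" using j3 innle unfolding J3_def E' outer' by (meson le_less_trans)
  have J4': "J4 \<sigma>'" unfolding J4_def using lfR by auto
  have J6': "J6 \<sigma>'" unfolding J6_def using lfR by auto
  have J5': "J5 \<sigma>'"
  proof -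
    have "\<forall>b\<in>set (st_q \<sigma>). cg (fst (snd b)) (fst (snd a)) \<longrightarrow> fst b \<le> fst a"
    proof (intro ballI impI)
      fix b assume b: "b \<in> set (st_q \<sigma>)" and cb: "cg (fst (snd b)) (fst (snd a))"
      have "cg h (fst (snd b) - 1)" using cb cg_minus1 cg_sym by (simp add: a_def h_def)
      thus "fst b \<le> fst a" using j7 b nlf lc unfolding J7_def by (simp add: a_def Ep h_def)
    qed
    thus ?thesis using j5 q'e unfolding J5_def by (simp add: \<sigma>'_def sorted_wrt_append)
  qed
  have J7': "J7 \<sigma>'" unfolding J7_def
  proof (intro ballI allI impI)
    fix b s y' assume b: "b \<in> set (QQ \<sigma>')" and cb: "cg s (fst (snd b) - 1)"
      and nl: "\<not> lf \<sigma>' s y'" and yo: "y' \<le> st_outer \<sigma>' s"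
    have i': "st_inner \<sigma>' s < y'" using nl lfR by simp
    show "fst b \<le> E \<sigma>' s y'"
    proof (cases "b = a")
      case True
      hence cs: "cg s h" using cb by (simp add: a_def h_def)
      have "E \<sigma> s (c s) \<le> E \<sigma> s y'"
        using chain_mono[of "st_inner \<sigma> s" "st_outer \<sigma> s" "E \<sigma> s" "c s" y'] j3 inn[OF cs] i' inner' cs yo outer'
        unfolding J3_def by simp
      thus ?thesis using True Ecs[OF cs] E' by (simp add: a_def)
    next
      case False
      hence "b \<in> set (QQ \<sigma>)" using b setQ q'e by auto
      moreover have "\<not> lf \<sigma> s y'" using lfold i' innle by (meson le_less_trans not_le)
      ultimately show ?thesis using j7 cb yo outer' E' unfolding J7_def by simp
    qed
  qed
  have keyLp: "keyL (p,p) = keyT p" by (simp add: keyL_def keyT_def)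
  have keyQa: "keyQ a = (1, p)" by (simp add: keyQ_def a_def)
  have J8': "J8 \<sigma>'"
  proof -
    let ?old = "map keyL (st_log \<sigma>) @ map keyT (st_todo \<sigma>) @ map keyQ (QQ \<sigma>)"
    have eq: "map keyL (st_log \<sigma>') @ map keyT (st_todo \<sigma>') @ map keyQ (QQ \<sigma>') = ?old @ [keyQ a]"
      using td q'e keyLp by (simp add: \<sigma>'_def)
    have so: "sorted_wrt (<) ?old" using j8 by (simp add: J8_def)
    have lt: "\<forall>z\<in>set ?old. z < keyQ a"
    proof
      fix z assume z: "z \<in> set ?old"
      have logp: "\<forall>z\<in>keyL ` set (st_log \<sigma>). z < keyT p" using so td by (simp add: sorted_wrt_append)
      then consider "z \<in> keyL ` set (st_log \<sigma>)" | "z \<in> keyT ` set (st_todo \<sigma>)" | b where "b \<in> set (st_q \<sigma>)" "z = keyQ b"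
        using z q'e by auto
      thus "z < keyQ a"
      proof cases
        case 1 hence "z < keyT p" using logp by blast
        moreover have "keyT p < keyQ a" using keyQa by (simp add: keyT_def)
        ultimately show ?thesis by (rule less_trans)
      next
        case 2 thus ?thesis using keyQa by (auto simp: keyT_def)
      next
        case 3
        obtain R where R: "\<forall>a\<in>set (st_q \<sigma>). fst (keyQ a) = R" "R = 1" using j11 td by (auto simp: J11_def)
        have "(fst (keyQ b) - 1, snd (keyQ b)) \<in> keyL ` set (st_log \<sigma>)" using j12 3 by (auto simp: J12_def)
        hence "(0, snd (keyQ b)) < keyT p" using logp R 3 by fastforce
        hence "snd (keyQ b) < p" by (simp add: keyT_def)
        moreover have "fst (keyQ b) = 1" using R 3 by simp
        ultimately show ?thesis using 3 keyQa by (cases "keyQ b") auto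
      qed
    qed
    show ?thesis unfolding J8_def eq using so lt by (simp add: sorted_wrt_append)
  qed
  have J9': "J9 \<sigma>'" unfolding J9_def
  proof
    fix p' assume p': "p' \<in> set (st_todo \<sigma>')"
    hence p'r: "p' \<in> set rest" by (simp add: \<sigma>'_def)
    have wp': "win p'" using j9 td p'r by (auto simp: J9_def)
    have nl': "\<not> lf \<sigma> (fst p') (snd p')" using j9 td p'r by (auto simp: J9_def)
    have "st_inner \<sigma>' (fst p') < snd p'"
    proof (cases "cg (fst p') h")
      case True
      hence fe: "fst p' = h" using win_cg[OF wp' winp] by (simp add: h_def)
      have "keyT p < keyT p'" using j8 td p'r unfolding J8_def by (simp add: sorted_wrt_append)
      hence "snd p < snd p'" using fe h_def by (cases p, cases p') (auto simp: keyT_def)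
      moreover have "c (fst p') = snd p" using fe by (simp add: c_def cs_def h_def)
      ultimately show ?thesis using inner' True by simp
    next
      case False thus ?thesis using inner' nl' lfold by simp
    qed
    thus "\<not> lf \<sigma>' (fst p') (snd p') \<and> win p'" using lfR wp' by simp
  qed
  have J10': "J10 \<sigma>'" unfolding J10_def using lfR q'e by (simp add: \<sigma>'_def)
  have J11': "J11 \<sigma>'"
  proof -
    obtain R where R: "\<forall>a\<in>set (st_q \<sigma>). fst (keyQ a) = R" "R = 1" using j11 td by (auto simp: J11_def)
    show ?thesis unfolding J11_def using R q'e keyQa by (intro exI[of _ 1]) (simp add: \<sigma>'_def)
  qed
  have J12': "J12 \<sigma>'"
  proof -
    have "(fst (keyQ a) - 1, snd (keyQ a)) = keyL (p,p)" using keyQa by (simp add: keyL_def)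
    thus ?thesis using j12 unfolding J12_def by (auto simp: \<sigma>'_def)
  qed
  have J13': "J13 \<sigma>'"
  proof -
    have "\<forall>e\<in>set (st_log \<sigma>). cg (fst (snd e)) (fst p) \<longrightarrow> cs (fst p) (snd e) < snd p"
      using nlf cg_sym unfolding lf_def h_def by (meson not_le)
    thus ?thesis using j13 unfolding J13_def by (simp add: \<sigma>'_def sorted_wrt_append)
  qed
  have J14': "J14 \<sigma>'" using j14 winp unfolding J14_def by (simp add: \<sigma>'_def)
  show ?thesis unfolding step INV_def
    using per' J2' J3' J4' J5' J6' J7' J8' J9' J10' J11' J12' J13' J14' by blast
qed


lemma rem_nonlam:
  fixes \<sigma> :: "'a::linorder fm_state"
  assumes I: "INV \<sigma>" and td: "st_todo \<sigma> = p # rest" and lc: "\<not> snd p \<le> st_outer \<sigma> (fst p)"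
  shows "INV (fm_step n k \<sigma>)"
proof -
  define \<sigma>' where "\<sigma>' = \<sigma>\<lparr>st_todo := rest, st_outer := add_box (st_outer \<sigma>) (proj n k p),
      st_inner := add_box (st_inner \<sigma>) (proj n k p), st_log := st_log \<sigma> @ [(p,p)]\<rparr>"
  have step: "fm_step n k \<sigma> = \<sigma>'" using td lc by (simp add: fm_step_def Let_def \<sigma>'_def)
  have pi: "per (st_inner \<sigma>)" and po: "per (st_outer \<sigma>)" and j2: "J2 \<sigma>" and j3: "J3 \<sigma>"
    and j4: "J4 \<sigma>" and j5: "J5 \<sigma>" and j6: "J6 \<sigma>"
    and j7: "J7 \<sigma>" and j8: "J8 \<sigma>" and j9: "J9 \<sigma>" and j10: "J10 \<sigma>"
    and j11: "J11 \<sigma>" and j12: "J12 \<sigma>" and j13: "J13 \<sigma>" and j14: "J14 \<sigma>"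
    using I by (simp_all add: INV_def)
  define h where "h = fst p"
  define c where "c s = cs s p" for s
  have q'e: "st_q' \<sigma> = []" and lf10: "\<And>s y. lf \<sigma> s y \<Longrightarrow> y \<le> st_inner \<sigma> s"
    using j10 td by (auto simp: J10_def)
  have lfold: "\<And>s y. lf \<sigma> s y \<longleftrightarrow> y \<le> st_inner \<sigma> s" using lf10 by (auto simp: lf_def)
  have nlf: "\<not> lf \<sigma> h (snd p)" and winp: "win p" using j9 td by (auto simp: J9_def h_def)
  have cgc: "\<not> lf \<sigma> s (c s) \<and> st_outer \<sigma> s < c s" if cgs: "cg s h" for s
  proof -
    have cc: "c s = snd p + ((h - s) div kk) * dd" by (simp add: c_def cs_def h_def)
    have "lf \<sigma> s (c s) \<longleftrightarrow> lf \<sigma> h (snd p)" using lf_cg[OF pi cgs] cc by simp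
    moreover have "st_outer \<sigma> s = st_outer \<sigma> h + ((h - s) div kk) * dd" using per_cg[OF po cgs] .
    ultimately show ?thesis using nlf lc cc h_def by simp
  qed
  have inn: "st_inner \<sigma> s < c s" if "cg s h" for s using cgc[OF that] lfold by force
  have inner': "st_inner \<sigma>' s = (if cg s h then c s else st_inner \<sigma> s)" for s
    using inn[of s] by (cases "cg s h") (simp_all add: \<sigma>'_def add_box_proj h_def c_def max_def)
  have outer': "st_outer \<sigma>' s = (if cg s h then c s else st_outer \<sigma> s)" for s
    using cgc[of s] by (cases "cg s h") (simp_all add: \<sigma>'_def add_box_proj h_def c_def max_def)
  have innle: "st_inner \<sigma> s \<le> st_inner \<sigma>' s" for s using inner' inn by (simp add: less_imp_le)
  have E': "E \<sigma>' = E \<sigma>" by (simp add: E_def \<sigma>'_def fun_eq_iff)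
  have lfR: "lf \<sigma>' s y \<longleftrightarrow> y \<le> st_inner \<sigma>' s" for s y
  proof
    assume "lf \<sigma>' s y"
    then consider "y \<le> st_inner \<sigma>' s" | e where "e \<in> set (st_log \<sigma>)" "cg s (fst (snd e))" "y \<le> cs s (snd e)"
      | "cg s h" "y \<le> c s"
      unfolding lf_def by (auto simp: \<sigma>'_def h_def c_def)
    thus "y \<le> st_inner \<sigma>' s"
    proof cases
      case 2
      hence "lf \<sigma> s (cs s (snd e))" unfolding lf_def by auto
      thus ?thesis using lf10 innle 2 by (meson order_trans)
    qed (use inner' in auto)
  qed (simp add: lf_def)
  have QQe: "QQ \<sigma>' = QQ \<sigma>" by (simp add: \<sigma>'_def)
  have per': "per (st_inner \<sigma>')" "per (st_outer \<sigma>')" using pi po per_add_box by (simp_all add: \<sigma>'_def)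
  have io: "st_inner \<sigma> s \<le> st_outer \<sigma> s" for s using j2 lfold unfolding J2_def by blast
  have J2': "J2 \<sigma>'" unfolding J2_def
  proof (intro allI impI)
    fix s y assume "lf \<sigma>' s y"
    hence "y \<le> st_inner \<sigma>' s" using lfR by simp
    thus "y \<le> st_outer \<sigma>' s" using inner'[of s] outer'[of s] io[of s] by (cases "cg s h") auto
  qed
  have J3': "J3 \<sigma>'" unfolding J3_def
  proof (intro allI impI)
    fix s y assume a1: "st_inner \<sigma>' s < y" and a2: "y + 1 \<le> st_outer \<sigma>' s"
    have "\<not> cg s h" using a1 a2 inner'[of s] outer'[of s] by (cases "cg s h") auto
    thus "E \<sigma>' s y \<le> E \<sigma>' s (y + 1)" using a1 a2 inner'[of s] outer'[of s] j3 E' unfolding J3_def by simp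
  qed
  have J4': "J4 \<sigma>'" unfolding J4_def using lfR by auto
  have J6': "J6 \<sigma>'" unfolding J6_def using lfR by auto
  have J5': "J5 \<sigma>'" using j5 QQe unfolding J5_def by simp
  have J7': "J7 \<sigma>'" unfolding J7_def
  proof (intro ballI allI impI)
    fix b s y' assume b: "b \<in> set (QQ \<sigma>')" and cb: "cg s (fst (snd b) - 1)"
      and nl: "\<not> lf \<sigma>' s y'" and yo: "y' \<le> st_outer \<sigma>' s"
    have i': "st_inner \<sigma>' s < y'" using nl lfR by simp
    have ncg: "\<not> cg s h" using i' yo inner'[of s] outer'[of s] by (cases "cg s h") auto
    have "\<not> lf \<sigma> s y'" using lfold i' inner'[of s] ncg by simp
    thus "fst b \<le> E \<sigma>' s y'" using j7 b QQe cb yo outer'[of s] ncg E' unfolding J7_def by simp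
  qed
  have keyLp: "keyL (p,p) = keyT p" by (simp add: keyL_def keyT_def)
  have J8': "J8 \<sigma>'"
  proof -
    have eq: "map keyL (st_log \<sigma>') @ map keyT (st_todo \<sigma>') @ map keyQ (QQ \<sigma>') =
       map keyL (st_log \<sigma>) @ map keyT (st_todo \<sigma>) @ map keyQ (QQ \<sigma>)"
      using td keyLp by (simp add: \<sigma>'_def)
    show ?thesis using j8 unfolding J8_def eq .
  qed
  have J9': "J9 \<sigma>'" unfolding J9_def
  proof
    fix p' assume p': "p' \<in> set (st_todo \<sigma>')"
    hence p'r: "p' \<in> set rest" by (simp add: \<sigma>'_def)
    have wp': "win p'" using j9 td p'r by (auto simp: J9_def)
    have nl': "\<not> lf \<sigma> (fst p') (snd p')" using j9 td p'r by (auto simp: J9_def)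
    have "st_inner \<sigma>' (fst p') < snd p'"
    proof (cases "cg (fst p') h")
      case True
      hence fe: "fst p' = h" using win_cg[OF wp' winp] by (simp add: h_def)
      have "keyT p < keyT p'" using j8 td p'r unfolding J8_def by (simp add: sorted_wrt_append)
      hence "snd p < snd p'" using fe h_def by (cases p, cases p') (auto simp: keyT_def)
      moreover have "c (fst p') = snd p" using fe by (simp add: c_def cs_def h_def)
      ultimately show ?thesis using inner' True by simp
    next
      case False thus ?thesis using inner' nl' lfold by simp
    qed
    thus "\<not> lf \<sigma>' (fst p') (snd p') \<and> win p'" using lfR wp' by simp
  qed
  have J10': "J10 \<sigma>'" unfolding J10_def using lfR q'e by (simp add: \<sigma>'_def)
  have J11': "J11 \<sigma>'"
  proof -
    obtain R where R: "\<forall>a\<in>set (st_q \<sigma>). fst (keyQ a) = R" "R = 1" using j11 td by (auto simp: J11_def)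
    show ?thesis unfolding J11_def using R q'e by (intro exI[of _ 1]) (simp add: \<sigma>'_def)
  qed
  have J12': "J12 \<sigma>'" using j12 unfolding J12_def by (auto simp: \<sigma>'_def)
  have J13': "J13 \<sigma>'"
  proof -
    have "\<forall>e\<in>set (st_log \<sigma>). cg (fst (snd e)) (fst p) \<longrightarrow> cs (fst p) (snd e) < snd p"
      using nlf cg_sym unfolding lf_def h_def by (meson not_le)
    thus ?thesis using j13 unfolding J13_def by (simp add: \<sigma>'_def sorted_wrt_append)
  qed
  have J14': "J14 \<sigma>'" using j14 winp unfolding J14_def by (simp add: \<sigma>'_def)
  show ?thesis unfolding step INV_def
    using per' J2' J3' J4' J5' J6' J7' J8' J9' J10' J11' J12' J13' J14' by blast
qed


lemma E_upd: "st_ent \<sigma>' = (st_ent \<sigma>)(proj n k q := x) \<Longrightarrow>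
   E \<sigma>' s y = (if cg s (fst q) \<and> y = cs s q then x else E \<sigma> s y)"
  by (simp add: E_def proj_eq)

lemma lf_app: "st_inner \<sigma>' = st_inner \<sigma> \<Longrightarrow> st_log \<sigma>' = st_log \<sigma> @ [(t,q)] \<Longrightarrow>
   lf \<sigma>' s y \<longleftrightarrow> lf \<sigma> s y \<or> (cg s (fst q) \<and> y \<le> cs s q)"
  unfolding lf_def by auto

lemma swap_step:
  fixes \<sigma> :: "'a::linorder fm_state"
  assumes I: "INV \<sigma>" and td: "st_todo \<sigma> = []" and qe: "st_q \<sigma> = []"
  shows "INV (fm_step n k \<sigma>)"
proof -
  define \<sigma>' where "\<sigma>' = \<sigma>\<lparr>st_q := st_q' \<sigma>, st_q' := []\<rparr>"
  have step: "fm_step n k \<sigma> = \<sigma>'" using td qe by (simp add: fm_step_def \<sigma>'_def)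
  have QQe: "QQ \<sigma>' = QQ \<sigma>" using qe by (simp add: \<sigma>'_def)
  have E': "E \<sigma>' = E \<sigma>" by (simp add: E_def \<sigma>'_def fun_eq_iff)
  have lf': "lf \<sigma>' = lf \<sigma>" by (simp add: lf_def \<sigma>'_def fun_eq_iff)
  have j11: "J11 \<sigma>" using I by (simp add: INV_def)
  have "J11 \<sigma>'"
  proof -
    obtain R where "\<forall>b\<in>set (st_q' \<sigma>). fst (keyQ b) = R + 1" using j11 by (auto simp: J11_def)
    thus ?thesis unfolding J11_def using td by (intro exI[of _ "R+1"]) (simp add: \<sigma>'_def)
  qed
  moreover have "st_inner \<sigma>' = st_inner \<sigma>" "st_outer \<sigma>' = st_outer \<sigma>" "st_log \<sigma>' = st_log \<sigma>"
     "st_todo \<sigma>' = st_todo \<sigma>" by (simp_all add: \<sigma>'_def)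
  ultimately show ?thesis using I QQe E' lf' td unfolding step INV_def J2_def J3_def J4_def J5_def J6_def J7_def J8_def
     J9_def J10_def J12_def J13_def J14_def by simp
qed

lemma place_step:
  fixes \<sigma> :: "'a::linorder fm_state"
  assumes I: "INV \<sigma>" and td: "st_todo \<sigma> = []" and qa: "st_q \<sigma> = (x, s0, t) # q1"
    and cond: "\<forall>y. st_inner \<sigma> s0 < y \<and> y \<le> st_outer \<sigma> s0 \<longrightarrow> st_ent \<sigma> (proj n k (s0, y)) \<le> x"
  shows "INV (fm_step n k \<sigma>)"
proof -
  define y0 where "y0 = st_outer \<sigma> s0 + 1"
  define \<sigma>' where "\<sigma>' = \<sigma>\<lparr>st_q := q1, st_outer := add_box (st_outer \<sigma>) (proj n k (s0, y0)),
      st_ent := (st_ent \<sigma>)(proj n k (s0, y0) := x), st_log := st_log \<sigma> @ [(t, (s0, y0))]\<rparr>"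
  have step: "fm_step n k \<sigma> = \<sigma>'" using td qa cond by (simp add: fm_step_def Let_def \<sigma>'_def y0_def)
  have pi: "per (st_inner \<sigma>)" and po: "per (st_outer \<sigma>)" and j2: "J2 \<sigma>" and j3: "J3 \<sigma>"
    and j4: "J4 \<sigma>" and j5: "J5 \<sigma>" and j6: "J6 \<sigma>"
    and j7: "J7 \<sigma>" and j8: "J8 \<sigma>" and j9: "J9 \<sigma>" and j10: "J10 \<sigma>"
    and j11: "J11 \<sigma>" and j12: "J12 \<sigma>" and j13: "J13 \<sigma>" and j14: "J14 \<sigma>"
    using I by (simp_all add: INV_def)
  define a where "a = (x, s0, t)"
  define c where "c s = cs s (s0, y0)" for s
  have QQo: "QQ \<sigma> = a # (q1 @ st_q' \<sigma>)" using qa by (simp add: a_def)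
  have QQn: "QQ \<sigma>' = q1 @ st_q' \<sigma>" by (simp add: \<sigma>'_def)
  have nlf0: "\<not> lf \<sigma> s0 y0" using j2 unfolding J2_def y0_def by force
  have E': "E \<sigma>' s y = (if cg s s0 \<and> y = c s then x else E \<sigma> s y)" for s y
    using E_upd[of \<sigma>' \<sigma> "(s0,y0)" x s y] by (simp add: \<sigma>'_def c_def)
  have lf': "lf \<sigma>' s y \<longleftrightarrow> lf \<sigma> s y \<or> (cg s s0 \<and> y \<le> c s)" for s y
    using lf_app[of \<sigma>' \<sigma> t "(s0,y0)" s y] by (simp add: \<sigma>'_def c_def)
  have tr: "\<not> lf \<sigma> s (c s) \<and> c s = st_outer \<sigma> s + 1 \<and>
            (\<forall>y. st_inner \<sigma> s < y \<longrightarrow> y < c s \<longrightarrow> E \<sigma> s y \<le> x)" if cgs: "cg s s0" for s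
  proof -
    define j where "j = (s0 - s) div kk"
    have cc: "c s = y0 + j * dd" by (simp add: c_def cs_def j_def)
    have "lf \<sigma> s (c s) \<longleftrightarrow> lf \<sigma> s0 y0" using lf_cg[OF pi cgs] cc j_def by simp
    moreover have os: "st_outer \<sigma> s = st_outer \<sigma> s0 + j * dd" using per_cg[OF po cgs] j_def by simp
    moreover have ins: "st_inner \<sigma> s = st_inner \<sigma> s0 + j * dd" using per_cg[OF pi cgs] j_def by simp
    moreover have "\<forall>y. st_inner \<sigma> s < y \<longrightarrow> y < c s \<longrightarrow> E \<sigma> s y \<le> x"
    proof (intro allI impI)
      fix y assume "st_inner \<sigma> s < y" "y < c s"
      hence "st_inner \<sigma> s0 < y - j * dd" "y - j * dd \<le> st_outer \<sigma> s0" using ins cc y0_def by linarith+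
      hence "E \<sigma> s0 (y - j * dd) \<le> x" using cond by (simp add: E_def)
      moreover have "E \<sigma> s y = E \<sigma> s0 (y - j * dd)" using E_cg[OF cgs, of \<sigma> y] by (simp add: j_def)
      ultimately show "E \<sigma> s y \<le> x" by simp
    qed
    ultimately show ?thesis using nlf0 cc y0_def by simp
  qed
  have lfc: "y < c s" if "cg s s0" "lf \<sigma> s y" for s y
    using tr[OF that(1)] lf_mono[OF that(2), of "c s"] by (meson not_le)
  have Ele: "E \<sigma>' s y \<le> x" if "cg s s0" "st_inner \<sigma> s < y" "y \<le> c s" for s y
    using tr[OF that(1)] that E'[of s y] by (cases "y = c s") auto
  have outer': "st_outer \<sigma>' s = (if cg s s0 then c s else st_outer \<sigma> s)" for s
    using tr[of s] by (cases "cg s s0") (simp_all add: \<sigma>'_def add_box_proj c_def max_def)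
  have inner': "st_inner \<sigma>' = st_inner \<sigma>" by (simp add: \<sigma>'_def)
  have per': "per (st_inner \<sigma>')" "per (st_outer \<sigma>')" using pi po per_add_box by (simp_all add: \<sigma>'_def)
  have J2': "J2 \<sigma>'" unfolding J2_def
  proof (intro allI impI)
    fix s y assume "lf \<sigma>' s y"
    hence "lf \<sigma> s y \<or> (cg s s0 \<and> y \<le> c s)" using lf' by simp
    moreover have "lf \<sigma> s y \<Longrightarrow> y \<le> st_outer \<sigma> s" using j2 unfolding J2_def by blast
    moreover have "st_outer \<sigma> s \<le> st_outer \<sigma>' s" using outer'[of s] tr[of s] by (cases "cg s s0") auto
    ultimately show "y \<le> st_outer \<sigma>' s" using outer'[of s] by auto
  qed
  have J3': "J3 \<sigma>'" unfolding J3_def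
  proof (intro allI impI)
    fix s y assume a1: "st_inner \<sigma>' s < y" and a2: "y + 1 \<le> st_outer \<sigma>' s"
    show "E \<sigma>' s y \<le> E \<sigma>' s (y + 1)"
    proof (cases "cg s s0")
      case cgs: True
      note T = tr[OF cgs]
      show ?thesis
      proof (cases "y + 1 = c s")
        case True
        hence "E \<sigma>' s y = E \<sigma> s y" "E \<sigma>' s (y+1) = x" using E'[of s y] E'[of s "y+1"] cgs by auto
        moreover have "E \<sigma> s y \<le> x" using T a1 inner' True by simp
        ultimately show ?thesis by simp
      next
        case False
        hence yo: "y + 1 \<le> st_outer \<sigma> s" using a2 outer'[of s] cgs T by simp
        hence "E \<sigma>' s y = E \<sigma> s y" "E \<sigma>' s (y+1) = E \<sigma> s (y+1)" using E'[of s y] E'[of s "y+1"] T by auto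
        moreover have "E \<sigma> s y \<le> E \<sigma> s (y+1)" using j3 a1 inner' yo unfolding J3_def by simp
        ultimately show ?thesis by simp
      qed
    next
      case False
      thus ?thesis using j3 a1 a2 inner' outer'[of s] E'[of s y] E'[of s "y+1"] unfolding J3_def by simp
    qed
  qed
  have J4': "J4 \<sigma>'" unfolding J4_def
  proof (intro ballI allI impI)
    fix b s y assume b: "b \<in> set (QQ \<sigma>')" and cb: "cg s (fst (snd b))" and iy: "st_inner \<sigma>' s < y"
      and l: "lf \<sigma>' s y"
    have bo: "b \<in> set (q1 @ st_q' \<sigma>)" using b QQn by simp
    show "E \<sigma>' s y \<le> fst b"
    proof (cases "cg s s0")
      case True
      have "y \<le> c s" using l lf'[of s y] lfc[OF True] by force
      hence "E \<sigma>' s y \<le> x" using Ele True iy inner' by simp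
      moreover have "x \<le> fst b"
      proof -
        have "cg s0 (fst (snd b))" using True cb cg_sym cg_trans by blast
        thus ?thesis using j5 QQo bo unfolding J5_def by (simp add: a_def)
      qed
      ultimately show ?thesis by (rule order_trans)
    next
      case False
      thus ?thesis using j4 QQo bo cb iy inner' l lf'[of s y] E'[of s y] unfolding J4_def by simp
    qed
  qed
  have J5': "J5 \<sigma>'" using j5 QQo QQn unfolding J5_def by simp
  have J6': "J6 \<sigma>'" unfolding J6_def
  proof (intro allI impI)
    fix u y y' assume iy: "st_inner \<sigma>' (u+1) < y" and l: "lf \<sigma>' (u+1) y" and nl: "\<not> lf \<sigma>' u y'"
      and yo': "y' \<le> st_outer \<sigma>' u"
    have nlo: "\<not> lf \<sigma> u y'" and cu: "cg u s0 \<Longrightarrow> c u < y'" using nl lf'[of u y'] by auto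
    have yo: "y' \<le> st_outer \<sigma> u" using yo' outer'[of u] cu tr[of u] by (cases "cg u s0") auto
    have Eu: "E \<sigma>' u y' = E \<sigma> u y'" using E'[of u y'] cu by auto
    show "E \<sigma>' (u+1) y \<le> E \<sigma>' u y'"
    proof (cases "cg (u+1) s0")
      case True
      have "y \<le> c (u+1)" using l lf'[of "u+1" y] lfc[OF True] by force
      hence "E \<sigma>' (u+1) y \<le> x" using Ele True iy inner' by simp
      moreover have "x \<le> E \<sigma> u y'"
      proof -
        have "cg u (s0 - 1)" using True cg_minus1 by simp
        thus ?thesis using j7 QQo nlo yo unfolding J7_def by (simp add: a_def)
      qed
      ultimately show ?thesis using Eu by simp
    next
      case False
      thus ?thesis using j6 iy l lf'[of "u+1" y] nlo yo Eu E'[of "u+1" y] inner' unfolding J6_def by simp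
    qed
  qed
  have J7': "J7 \<sigma>'" unfolding J7_def
  proof (intro ballI allI impI)
    fix b s y' assume b: "b \<in> set (QQ \<sigma>')" and cb: "cg s (fst (snd b) - 1)"
      and nl: "\<not> lf \<sigma>' s y'" and yo': "y' \<le> st_outer \<sigma>' s"
    have bo: "b \<in> set (q1 @ st_q' \<sigma>)" using b QQn by simp
    have nlo: "\<not> lf \<sigma> s y'" and cu: "cg s s0 \<Longrightarrow> c s < y'" using nl lf'[of s y'] by auto
    have ncg: "\<not> cg s s0" using yo' outer'[of s] cu by (cases "cg s s0") auto
    thus "fst b \<le> E \<sigma>' s y'" using j7 QQo bo cb nlo yo' outer'[of s] E'[of s y'] unfolding J7_def by simp
  qed
  have J8': "J8 \<sigma>'"
  proof -
    have "keyL (t, (s0, y0)) = keyQ a" by (simp add: keyL_def keyQ_def a_def)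
    hence eq: "map keyL (st_log \<sigma>') @ map keyT (st_todo \<sigma>') @ map keyQ (QQ \<sigma>') =
       map keyL (st_log \<sigma>) @ map keyT (st_todo \<sigma>) @ map keyQ (QQ \<sigma>)"
      using td QQo QQn by (simp add: \<sigma>'_def)
    show ?thesis using j8 unfolding J8_def eq .
  qed
  have J9': "J9 \<sigma>'" using td unfolding J9_def by (simp add: \<sigma>'_def)
  have J10': "J10 \<sigma>'" using td unfolding J10_def by (simp add: \<sigma>'_def)
  have J11': "J11 \<sigma>'"
  proof -
    obtain R where "\<forall>a\<in>set (st_q \<sigma>). fst (keyQ a) = R" "\<forall>b\<in>set (st_q' \<sigma>). fst (keyQ b) = R + 1"
      using j11 unfolding J11_def by blast
    thus ?thesis unfolding J11_def using qa td by (intro exI[of _ R]) (simp add: \<sigma>'_def)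
  qed
  have J12': "J12 \<sigma>'" using j12 QQo QQn unfolding J12_def by (auto simp: \<sigma>'_def)
  have J13': "J13 \<sigma>'"
  proof -
    have "\<forall>e\<in>set (st_log \<sigma>). cg (fst (snd e)) s0 \<longrightarrow> cs s0 (snd e) < y0"
      using nlf0 cg_sym unfolding lf_def by (meson not_le)
    thus ?thesis using j13 unfolding J13_def by (simp add: \<sigma>'_def sorted_wrt_append)
  qed
  have J14': "J14 \<sigma>'"
  proof -
    have "(fst (keyQ a) - 1, snd (keyQ a)) \<in> keyL ` set (st_log \<sigma>)" using j12 QQo unfolding J12_def by simp
    then obtain e where "e \<in> set (st_log \<sigma>)" "t = fst e" by (auto simp: keyL_def keyQ_def a_def)
    thus ?thesis using j14 unfolding J14_def by (auto simp: \<sigma>'_def)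
  qed
  show ?thesis unfolding step INV_def
    using per' J2' J3' J4' J5' J6' J7' J8' J9' J10' J11' J12' J13' J14' by blast
qed


lemma least_int:
  fixes P :: "int \<Rightarrow> bool"
  assumes ex: "P y1" and bd: "\<And>y. P y \<Longrightarrow> lo < y \<and> y \<le> hi"
  shows "P (LEAST y. P y) \<and> (\<forall>y. P y \<longrightarrow> (LEAST y. P y) \<le> y)"
proof -
  have sub: "{y. P y} \<subseteq> {lo<..hi}" using bd by auto
  have fin: "finite {y. P y}" by (rule finite_subset[OF sub]) simp
  have ne: "{y. P y} \<noteq> {}" using ex by blast
  define m where "m = Min {y. P y}"
  have "m \<in> {y. P y}" unfolding m_def by (rule Min_in[OF fin ne])
  hence Pm: "P m" by simp
  have le: "\<forall>y. P y \<longrightarrow> m \<le> y" unfolding m_def using Min_le[OF fin] by simp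
  have "(LEAST y. P y) = m" by (rule Least_equality) (use Pm le in auto)
  thus ?thesis using Pm le by simp
qed

lemma bump_step:
  fixes \<sigma> :: "'a::linorder fm_state"
  assumes I: "INV \<sigma>" and td: "st_todo \<sigma> = []" and qa: "st_q \<sigma> = (x, s0, t) # q1"
    and cond: "\<not> (\<forall>y. st_inner \<sigma> s0 < y \<and> y \<le> st_outer \<sigma> s0 \<longrightarrow> st_ent \<sigma> (proj n k (s0, y)) \<le> x)"
  shows "INV (fm_step n k \<sigma>)"
proof -
  define y0 where "y0 = (LEAST y. st_inner \<sigma> s0 < y \<and> y \<le> st_outer \<sigma> s0 \<and> x < st_ent \<sigma> (proj n k (s0, y)))"
  define x' where "x' = st_ent \<sigma> (proj n k (s0, y0))"
  define a' where "a' = (x', s0 + 1, t)"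
  define \<sigma>' where "\<sigma>' = \<sigma>\<lparr>st_q := q1, st_ent := (st_ent \<sigma>)(proj n k (s0, y0) := x),
      st_q' := st_q' \<sigma> @ [a'], st_log := st_log \<sigma> @ [(t, (s0, y0))]\<rparr>"
  have cf: "(\<forall>y. st_inner \<sigma> s0 < y \<and> y \<le> st_outer \<sigma> s0 \<longrightarrow> st_ent \<sigma> (proj n k (s0, y)) \<le> x) = False"
    using cond by blast
  have step: "fm_step n k \<sigma> = \<sigma>'" unfolding fm_step_def using td qa
    by (simp only: list.case prod.case cf if_False Let_def) (simp add: \<sigma>'_def y0_def x'_def a'_def)
  have pi: "per (st_inner \<sigma>)" and po: "per (st_outer \<sigma>)" and j2: "J2 \<sigma>" and j3: "J3 \<sigma>"
    and j4: "J4 \<sigma>" and j5: "J5 \<sigma>" and j6: "J6 \<sigma>"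
    and j7: "J7 \<sigma>" and j8: "J8 \<sigma>" and j9: "J9 \<sigma>" and j10: "J10 \<sigma>"
    and j11: "J11 \<sigma>" and j12: "J12 \<sigma>" and j13: "J13 \<sigma>" and j14: "J14 \<sigma>"
    using I by (simp_all add: INV_def)
  define a where "a = (x, s0, t)"
  define c where "c s = cs s (s0, y0)" for s
  have QQo: "QQ \<sigma> = a # (q1 @ st_q' \<sigma>)" using qa by (simp add: a_def)
  have QQn: "QQ \<sigma>' = q1 @ st_q' \<sigma> @ [a']" by (simp add: \<sigma>'_def)
  obtain y1 where "st_inner \<sigma> s0 < y1 \<and> y1 \<le> st_outer \<sigma> s0 \<and> x < E \<sigma> s0 y1" using cond
    by (auto simp: E_def not_le)
  define PP where "PP y = (st_inner \<sigma> s0 < y \<and> y \<le> st_outer \<sigma> s0 \<and> x < E \<sigma> s0 y)" for y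
  have y0P: "y0 = (LEAST y. PP y)" by (simp add: y0_def PP_def E_def)
  have "PP y1" using \<open>st_inner \<sigma> s0 < y1 \<and> y1 \<le> st_outer \<sigma> s0 \<and> x < E \<sigma> s0 y1\<close> by (simp add: PP_def)
  hence LL: "PP (LEAST y. PP y) \<and> (\<forall>y. PP y \<longrightarrow> (LEAST y. PP y) \<le> y)"
    by (rule least_int[of PP y1 "st_inner \<sigma> s0" "st_outer \<sigma> s0"]) (simp add: PP_def)
  have L: "st_inner \<sigma> s0 < y0 \<and> y0 \<le> st_outer \<sigma> s0 \<and> x < E \<sigma> s0 y0"
     "\<forall>y. st_inner \<sigma> s0 < y \<and> y \<le> st_outer \<sigma> s0 \<and> x < E \<sigma> s0 y \<longrightarrow> y0 \<le> y"
  proof -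
    have LL': "PP y0 \<and> (\<forall>y. PP y \<longrightarrow> y0 \<le> y)" unfolding y0P by (rule LL)
    show "st_inner \<sigma> s0 < y0 \<and> y0 \<le> st_outer \<sigma> s0 \<and> x < E \<sigma> s0 y0"
      using conjunct1[OF LL'] by (simp only: PP_def)
    show "\<forall>y. st_inner \<sigma> s0 < y \<and> y \<le> st_outer \<sigma> s0 \<and> x < E \<sigma> s0 y \<longrightarrow> y0 \<le> y"
      using conjunct2[OF LL'] by (simp only: PP_def)
  qed
  have below: "E \<sigma> s0 y \<le> x" if "st_inner \<sigma> s0 < y" "y < y0" for y
  proof (rule ccontr)
    assume "\<not> E \<sigma> s0 y \<le> x"
    hence "x < E \<sigma> s0 y" by simp
    moreover have "y \<le> st_outer \<sigma> s0" using that L(1) by simp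
    ultimately have "y0 \<le> y" using L(2) that by blast
    thus False using that by simp
  qed
  have nlf0: "\<not> lf \<sigma> s0 y0"
  proof
    assume "lf \<sigma> s0 y0"
    hence "E \<sigma> s0 y0 \<le> x" using j4 QQo L unfolding J4_def by (simp add: a_def)
    thus False using L(1) leD by blast
  qed
  have x'E: "x' = E \<sigma> s0 y0" by (simp add: x'_def E_def)
  have E': "E \<sigma>' s y = (if cg s s0 \<and> y = c s then x else E \<sigma> s y)" for s y
    using E_upd[of \<sigma>' \<sigma> "(s0,y0)" x s y] by (simp add: \<sigma>'_def c_def)
  have lf': "lf \<sigma>' s y \<longleftrightarrow> lf \<sigma> s y \<or> (cg s s0 \<and> y \<le> c s)" for s y
    using lf_app[of \<sigma>' \<sigma> t "(s0,y0)" s y] by (simp add: \<sigma>'_def c_def)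
  have Ec: "E \<sigma> s (c s) = x'" if "cg s s0" for s
  proof -
    have "proj n k (s, c s) = proj n k (s0, y0)" using that proj_eq[of s "c s" "(s0,y0)"] by (simp add: c_def)
    thus ?thesis by (simp add: E_def x'_def)
  qed
  have tr: "\<not> lf \<sigma> s (c s) \<and> c s \<le> st_outer \<sigma> s \<and> x < x' \<and>
            (\<forall>y. st_inner \<sigma> s < y \<longrightarrow> y < c s \<longrightarrow> E \<sigma> s y \<le> x)" if cgs: "cg s s0" for s
  proof -
    define j where "j = (s0 - s) div kk"
    have cc: "c s = y0 + j * dd" by (simp add: c_def cs_def j_def)
    have "lf \<sigma> s (c s) \<longleftrightarrow> lf \<sigma> s0 y0" using lf_cg[OF pi cgs] cc j_def by simp
    moreover have os: "st_outer \<sigma> s = st_outer \<sigma> s0 + j * dd" using per_cg[OF po cgs] j_def by simp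
    moreover have ins: "st_inner \<sigma> s = st_inner \<sigma> s0 + j * dd" using per_cg[OF pi cgs] j_def by simp
    moreover have "\<forall>y. st_inner \<sigma> s < y \<longrightarrow> y < c s \<longrightarrow> E \<sigma> s y \<le> x"
    proof (intro allI impI)
      fix y assume "st_inner \<sigma> s < y" "y < c s"
      hence "st_inner \<sigma> s0 < y - j * dd" "y - j * dd < y0" using ins cc by linarith+
      hence "E \<sigma> s0 (y - j * dd) \<le> x" using below by simp
      moreover have "E \<sigma> s y = E \<sigma> s0 (y - j * dd)" using E_cg[OF cgs, of \<sigma> y] by (simp add: j_def)
      ultimately show "E \<sigma> s y \<le> x" by simp
    qed
    ultimately show ?thesis using nlf0 cc L x'E by simp
  qed
  have inc: "st_inner \<sigma> s < c s" if "cg s s0" for s using tr[OF that] unfolding lf_def by force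
  have lfc: "y < c s" if "cg s s0" "lf \<sigma> s y" for s y
    using tr[OF that(1)] lf_mono[OF that(2), of "c s"] by (meson not_le)
  have Ele: "E \<sigma>' s y \<le> x" if "cg s s0" "st_inner \<sigma> s < y" "y \<le> c s" for s y
    using tr[OF that(1)] that E'[of s y] by (cases "y = c s") auto
  have outer': "st_outer \<sigma>' = st_outer \<sigma>" by (simp add: \<sigma>'_def)
  have inner': "st_inner \<sigma>' = st_inner \<sigma>" by (simp add: \<sigma>'_def)
  have per': "per (st_inner \<sigma>')" "per (st_outer \<sigma>')" using pi po by (simp_all add: \<sigma>'_def)
  have J2': "J2 \<sigma>'" unfolding J2_def
  proof (intro allI impI)
    fix s y assume "lf \<sigma>' s y"
    hence "lf \<sigma> s y \<or> (cg s s0 \<and> y \<le> c s)" using lf' by simp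
    moreover have "lf \<sigma> s y \<Longrightarrow> y \<le> st_outer \<sigma> s" using j2 unfolding J2_def by blast
    ultimately show "y \<le> st_outer \<sigma>' s" using outer' tr[of s] by auto
  qed
  have J3': "J3 \<sigma>'" unfolding J3_def
  proof (intro allI impI)
    fix s y assume a1: "st_inner \<sigma>' s < y" and a2: "y + 1 \<le> st_outer \<sigma>' s"
    have o3: "E \<sigma> s y \<le> E \<sigma> s (y+1)" using j3 a1 a2 inner' outer' unfolding J3_def by simp
    show "E \<sigma>' s y \<le> E \<sigma>' s (y + 1)"
    proof (cases "cg s s0")
      case cgs: True
      note T = tr[OF cgs]
      consider "y = c s" | "y + 1 = c s" | "y \<noteq> c s" "y + 1 \<noteq> c s" by blast
      thus ?thesis
      proof cases
        case 1
        hence "E \<sigma>' s y = x" "E \<sigma>' s (y+1) = E \<sigma> s (y+1)" using E'[of s y] E'[of s "y+1"] cgs by auto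
        moreover have "x < E \<sigma> s y" using 1 Ec[OF cgs] T by simp
        ultimately show ?thesis using o3 by simp
      next
        case 2
        hence "E \<sigma>' s y = E \<sigma> s y" "E \<sigma>' s (y+1) = x" using E'[of s y] E'[of s "y+1"] cgs by auto
        moreover have "E \<sigma> s y \<le> x" using T a1 inner' 2 by simp
        ultimately show ?thesis by simp
      next
        case 3
        thus ?thesis using E'[of s y] E'[of s "y+1"] o3 by simp
      qed
    next
      case False
      thus ?thesis using E'[of s y] E'[of s "y+1"] o3 by simp
    qed
  qed
  have J4': "J4 \<sigma>'" unfolding J4_def
  proof (intro ballI allI impI)
    fix b s y assume b: "b \<in> set (QQ \<sigma>')" and cb: "cg s (fst (snd b))" and iy: "st_inner \<sigma>' s < y"
      and l: "lf \<sigma>' s y"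
    show "E \<sigma>' s y \<le> fst b"
    proof (cases "b = a'")
      case ba: True
      show ?thesis
      proof (cases "cg s s0")
        case True
        have "y \<le> c s" using l lf'[of s y] lfc[OF True] by force
        hence "E \<sigma>' s y \<le> x" using Ele True iy inner' by simp
        moreover have "x \<le> x'" using tr[OF True] by (simp add: less_imp_le)
        ultimately show ?thesis using ba by (simp add: a'_def)
      next
        case False
        have "cg s (s0 + 1)" using cb ba by (simp add: a'_def)
        moreover have "s - 1 - s0 = s - (s0 + 1)" by simp
        ultimately have cs1: "cg (s - 1) s0" unfolding cg_def by metis
        have l0: "lf \<sigma> s y" using l lf' False by simp
        have j6i: "st_inner \<sigma> ((s-1)+1) < y \<Longrightarrow> lf \<sigma> ((s-1)+1) y \<Longrightarrow> \<not> lf \<sigma> (s-1) y'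
            \<Longrightarrow> y' \<le> st_outer \<sigma> (s-1) \<Longrightarrow> E \<sigma> ((s-1)+1) y \<le> E \<sigma> (s-1) y'" for y'
          using j6 unfolding J6_def by blast
        have "E \<sigma> ((s - 1) + 1) y \<le> E \<sigma> (s - 1) (c (s - 1))"
          using j6i[of "c (s-1)"] tr[OF cs1] iy inner' l0 by simp
        thus ?thesis using Ec[OF cs1] E'[of s y] False ba by (simp add: a'_def)
      qed
    next
      case False
      hence bo: "b \<in> set (q1 @ st_q' \<sigma>)" using b QQn by simp
      show ?thesis
      proof (cases "cg s s0")
        case True
        have "y \<le> c s" using l lf'[of s y] lfc[OF True] by force
        hence "E \<sigma>' s y \<le> x" using Ele True iy inner' by simp
        moreover have "x \<le> fst b"
        proof -
          have "cg s0 (fst (snd b))" using True cb cg_sym cg_trans by blast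
          thus ?thesis using j5 QQo bo unfolding J5_def by (simp add: a_def)
        qed
        ultimately show ?thesis by (rule order_trans)
      next
        case False
        thus ?thesis using j4 QQo bo cb iy inner' l lf'[of s y] E'[of s y] unfolding J4_def by simp
      qed
    qed
  qed
  have J5': "J5 \<sigma>'"
  proof -
    have "\<forall>b\<in>set (q1 @ st_q' \<sigma>). cg (fst (snd b)) (fst (snd a')) \<longrightarrow> fst b \<le> fst a'"
    proof (intro ballI impI)
      fix b assume b: "b \<in> set (q1 @ st_q' \<sigma>)" and cb: "cg (fst (snd b)) (fst (snd a'))"
      have "cg s0 (fst (snd b) - 1)" using cb cg_minus1 cg_sym by (simp add: a'_def)
      thus "fst b \<le> fst a'" using j7 b QQo nlf0 L x'E unfolding J7_def by (simp add: a'_def)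
    qed
    moreover have "sorted_wrt (\<lambda>a b. cg (fst (snd a)) (fst (snd b)) \<longrightarrow> fst a \<le> fst b) (q1 @ st_q' \<sigma>)"
      using j5 QQo unfolding J5_def by simp
    ultimately show ?thesis unfolding J5_def QQn by (simp add: sorted_wrt_append)
  qed
  have J6': "J6 \<sigma>'" unfolding J6_def
  proof (intro allI impI)
    fix u y y' assume iy: "st_inner \<sigma>' (u+1) < y" and l: "lf \<sigma>' (u+1) y" and nl: "\<not> lf \<sigma>' u y'"
      and yo: "y' \<le> st_outer \<sigma>' u"
    have nlo: "\<not> lf \<sigma> u y'" and cu: "cg u s0 \<Longrightarrow> c u < y'" using nl lf'[of u y'] by auto
    have Eu: "E \<sigma>' u y' = E \<sigma> u y'" using E'[of u y'] cu by auto
    show "E \<sigma>' (u+1) y \<le> E \<sigma>' u y'"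
    proof (cases "cg (u+1) s0")
      case True
      have "y \<le> c (u+1)" using l lf'[of "u+1" y] lfc[OF True] by force
      hence "E \<sigma>' (u+1) y \<le> x" using Ele True iy inner' by simp
      moreover have "x \<le> E \<sigma> u y'"
      proof -
        have "cg u (s0 - 1)" using True cg_minus1 by simp
        thus ?thesis using j7 QQo nlo yo outer' unfolding J7_def by (simp add: a_def)
      qed
      ultimately show ?thesis using Eu by simp
    next
      case False
      thus ?thesis using j6 iy l lf'[of "u+1" y] nlo yo outer' Eu E'[of "u+1" y] inner' unfolding J6_def by simp
    qed
  qed
  have J7': "J7 \<sigma>'" unfolding J7_def
  proof (intro ballI allI impI)
    fix b s y' assume b: "b \<in> set (QQ \<sigma>')" and cb: "cg s (fst (snd b) - 1)"
      and nl: "\<not> lf \<sigma>' s y'" and yo: "y' \<le> st_outer \<sigma>' s"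
    have nlo: "\<not> lf \<sigma> s y'" and cu: "cg s s0 \<Longrightarrow> c s < y'" using nl lf'[of s y'] by auto
    have Es: "E \<sigma>' s y' = E \<sigma> s y'" using E'[of s y'] cu by auto
    show "fst b \<le> E \<sigma>' s y'"
    proof (cases "b = a'")
      case True
      hence cgs: "cg s s0" using cb by (simp add: a'_def)
      have "E \<sigma> s (c s) \<le> E \<sigma> s y'"
        using chain_mono[of "st_inner \<sigma> s" "st_outer \<sigma> s" "E \<sigma> s" "c s" y'] j3 inc[OF cgs] cu[OF cgs] yo outer'
        unfolding J3_def by simp
      thus ?thesis using True Ec[OF cgs] Es by (simp add: a'_def)
    next
      case False
      hence bo: "b \<in> set (q1 @ st_q' \<sigma>)" using b QQn by simp
      thus ?thesis using j7 QQo cb nlo yo outer' Es unfolding J7_def by simp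
    qed
  qed
  have keyLa: "keyL (t, (s0, y0)) = keyQ a" by (simp add: keyL_def keyQ_def a_def)
  have keya': "keyQ a' = (fst (keyQ a) + 1, t)" by (simp add: keyQ_def a_def a'_def)
  obtain R where R: "\<forall>b\<in>set (st_q \<sigma>). fst (keyQ b) = R" "\<forall>b\<in>set (st_q' \<sigma>). fst (keyQ b) = R + 1"
    using j11 unfolding J11_def by blast
  have Ra: "fst (keyQ a) = R" using R qa by (simp add: a_def)
  have J8': "J8 \<sigma>'"
  proof -
    let ?old = "map keyL (st_log \<sigma>) @ map keyT (st_todo \<sigma>) @ map keyQ (QQ \<sigma>)"
    have eq: "map keyL (st_log \<sigma>') @ map keyT (st_todo \<sigma>') @ map keyQ (QQ \<sigma>') = ?old @ [keyQ a']"
      using td QQo QQn keyLa by (simp add: \<sigma>'_def)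
    have so: "sorted_wrt (<) ?old" using j8 by (simp add: J8_def)
    have so2: "sorted_wrt (<) (map keyL (st_log \<sigma>) @ [keyQ a] @ map keyQ (q1 @ st_q' \<sigma>))"
      using so td QQo by simp
    have logl: "\<forall>z\<in>keyL ` set (st_log \<sigma>). z < keyQ a" using so2 by (simp add: sorted_wrt_append)
    have lt: "\<forall>z\<in>set ?old. z < keyQ a'"
    proof
      fix z assume z: "z \<in> set ?old"
      have aa': "keyQ a < keyQ a'" using keya' by (cases "keyQ a") simp
      consider "z \<in> keyL ` set (st_log \<sigma>)" | "z = keyQ a" | b where "b \<in> set q1" "z = keyQ b"
        | b where "b \<in> set (st_q' \<sigma>)" "z = keyQ b"
        using z td QQo by auto
      thus "z < keyQ a'"
      proof cases
        case 1 thus ?thesis using logl aa' by (meson less_trans)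
      next
        case 2 thus ?thesis using aa' by simp
      next
        case 3
        hence "fst z = R" using R qa by simp
        thus ?thesis using keya' Ra by (cases z) simp
      next
        case 4
        have "(fst (keyQ b) - 1, snd (keyQ b)) \<in> keyL ` set (st_log \<sigma>)" using j12 4 by (auto simp: J12_def)
        hence "(R, snd (keyQ b)) < keyQ a" using logl R 4 by fastforce
        hence "snd (keyQ b) < t" using Ra by (simp add: keyQ_def a_def)
        moreover have "fst (keyQ b) = R + 1" using R 4 by simp
        ultimately show ?thesis using 4 keya' Ra by (cases "keyQ b") auto
      qed
    qed
    show ?thesis unfolding J8_def eq using so lt by (simp add: sorted_wrt_append)
  qed
  have J9': "J9 \<sigma>'" using td unfolding J9_def by (simp add: \<sigma>'_def)
  have J10': "J10 \<sigma>'" using td unfolding J10_def by (simp add: \<sigma>'_def)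
  have J11': "J11 \<sigma>'"
    unfolding J11_def using R qa keya' Ra td by (intro exI[of _ R]) (simp add: \<sigma>'_def)
  have J12': "J12 \<sigma>'"
  proof -
    have "(fst (keyQ a') - 1, snd (keyQ a')) = keyL (t, (s0, y0))" by (simp add: keyQ_def keyL_def a'_def)
    thus ?thesis using j12 QQo QQn unfolding J12_def by (auto simp: \<sigma>'_def)
  qed
  have J13': "J13 \<sigma>'"
  proof -
    have "\<forall>e\<in>set (st_log \<sigma>). cg (fst (snd e)) s0 \<longrightarrow> cs s0 (snd e) < y0"
      using nlf0 cg_sym unfolding lf_def by (meson not_le)
    thus ?thesis using j13 unfolding J13_def by (simp add: \<sigma>'_def sorted_wrt_append)
  qed
  have J14': "J14 \<sigma>'"
  proof -
    have "(fst (keyQ a) - 1, snd (keyQ a)) \<in> keyL ` set (st_log \<sigma>)" using j12 QQo unfolding J12_def by simp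
    then obtain e where "e \<in> set (st_log \<sigma>)" "t = fst e" by (auto simp: keyL_def keyQ_def a_def)
    thus ?thesis using j14 unfolding J14_def by (auto simp: \<sigma>'_def)
  qed
  show ?thesis unfolding step INV_def
    using per' J2' J3' J4' J5' J6' J7' J8' J9' J10' J11' J12' J13' J14' by blast
qed


lemma step_pres:
  fixes \<sigma> :: "'a::linorder fm_state"
  assumes I: "INV \<sigma>"
  shows "INV (fm_step n k \<sigma>)"
proof (cases "st_todo \<sigma>")
  case (Cons p rest)
  thus ?thesis using rem_lam[OF I] rem_nonlam[OF I] by blast
next
  case Nil
  show ?thesis
  proof (cases "st_q \<sigma>")
    case Nil2: Nil
    thus ?thesis using swap_step[OF I] Nil by blast
  next
    case (Cons a q1)
    obtain x s0 t where "a = (x, s0, t)" by (cases a) auto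
    thus ?thesis using place_step[OF I Nil] bump_step[OF I Nil] Cons by blast
  qed
qed

lemma sorted_concat_rows:
  fixes hs :: "int list" and f :: "int \<Rightarrow> int list"
  assumes "sorted_wrt (<) hs" and "\<And>h. sorted_wrt (<) (f h)"
  shows "sorted_wrt (<) (concat (map (\<lambda>h. map (\<lambda>y. (h, y)) (f h)) hs))"
  using assms(1)
proof (induction hs)
  case Nil thus ?case by simp
next
  case (Cons h hs)
  have s1: "sorted_wrt (<) (map (\<lambda>y. (h, y)) (f h))"
    using assms(2)[of h] by (simp add: sorted_wrt_map)
  have s2: "sorted_wrt (<) (concat (map (\<lambda>h. map (\<lambda>y. (h, y)) (f h)) hs))" using Cons by simp
  have s3: "\<forall>u\<in>set (map (\<lambda>y. (h, y)) (f h)). \<forall>v\<in>set (concat (map (\<lambda>h. map (\<lambda>y. (h, y)) (f h)) hs)). u < v"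
    using Cons.prems by auto
  show ?case using s1 s2 s3 by (simp add: sorted_wrt_append)
qed

lemma mem_sl: "y \<in> set (sorted_list_of_set (A :: int set)) \<Longrightarrow> y \<in> A"
  by (cases "finite A") (simp_all add: sorted_list_of_set.fold_insort_key.infinite)

lemma init_inv:
  fixes T :: "box \<Rightarrow> 'a::linorder"
  assumes ss: "ssyt n k lam mu T" and mi: "multi_input n k mu S"
  shows "INV (fm_init n k lam mu T S r0)"
proof -
  define \<sigma> where "\<sigma> = fm_init n k lam mu T S r0"
  have cl: "cyl n k lam" and cm: "cyl n k mu" and le: "\<forall>m. mu m \<le> lam m"
    and row: "\<forall>x y. in_skew lam mu (x, y) \<and> in_skew lam mu (x, y + 1) \<longrightarrow>
            T (proj n k (x, y)) \<le> T (proj n k (x, y + 1))"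
    using ss unfolding ssyt_def by blast+
  have sf: "st_outer \<sigma> = lam" "st_inner \<sigma> = mu" "st_ent \<sigma> = T" "st_q \<sigma> = []" "st_q' \<sigma> = []" "st_log \<sigma> = []"
    by (simp_all add: \<sigma>_def fm_init_def)
  have td: "st_todo \<sigma> = concat (map (\<lambda>h. map (\<lambda>y. (h, y)) (sorted_list_of_set {y. proj n k (h, y) \<in> S}))
                            [r0..r0 + int k - 1])" by (simp add: \<sigma>_def fm_init_def)
  have lfi: "lf \<sigma> s y \<longleftrightarrow> y \<le> mu s" for s y by (simp add: lf_def sf)
  have perl: "per lam" using cl unfolding cyl_def per_def by (simp add: algebra_simps)
  have perm: "per mu" using cm unfolding cyl_def per_def by (simp add: algebra_simps)
  have J2: "J2 \<sigma>" unfolding J2_def using lfi le sf by (metis order_trans)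
  have J3: "J3 \<sigma>" unfolding J3_def
  proof (intro allI impI)
    fix s y assume "st_inner \<sigma> s < y" "y + 1 \<le> st_outer \<sigma> s"
    hence "in_skew lam mu (s, y) \<and> in_skew lam mu (s, y + 1)" using sf by (simp add: in_skew_def pt_in_def)
    thus "E \<sigma> s y \<le> E \<sigma> s (y + 1)" using row sf by (simp add: E_def)
  qed
  have J4: "J4 \<sigma>" "J5 \<sigma>" "J7 \<sigma>" "J12 \<sigma>" "J13 \<sigma>" "J14 \<sigma>"
    by (simp_all add: J4_def J5_def J7_def J12_def J13_def J14_def sf)
  have J6: "J6 \<sigma>" unfolding J6_def using lfi sf by auto
  have memtd: "proj n k p \<in> S \<and> win p" if pm: "p \<in> set (st_todo \<sigma>)" for p
  proof -
    obtain h y where "h \<in> set [r0..r0 + int k - 1]" "y \<in> set (sorted_list_of_set {y. proj n k (h, y) \<in> S})"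
      "p = (h, y)" using pm td by auto
    thus ?thesis using mem_sl by (auto simp: win_def)
  qed
  have J9: "J9 \<sigma>" unfolding J9_def
  proof
    fix p assume pm: "p \<in> set (st_todo \<sigma>)"
    have "\<not> box_in mu (proj n k p)" using mi memtd[OF pm] unfolding multi_input_def by blast
    hence "\<not> pt_in mu p" using proj_self unfolding box_in_def by blast
    thus "\<not> lf \<sigma> (fst p) (snd p) \<and> win p" using lfi memtd[OF pm] by (simp add: pt_in_def)
  qed
  have J10: "J10 \<sigma>" unfolding J10_def using lfi sf by simp
  have J11: "J11 \<sigma>" unfolding J11_def using sf by simp
  have sotd: "sorted_wrt (<) (st_todo \<sigma>)" unfolding td
    by (rule sorted_concat_rows) (simp_all add: sorted_list_of_set.strict_sorted_key_list_of_set)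
  have J8: "J8 \<sigma>" unfolding J8_def using sotd sf by (simp add: sorted_wrt_map keyT_def)
  show ?thesis unfolding \<sigma>_def[symmetric] INV_def
    using perl perm sf J2 J3 J4 J6 J8 J9 J10 J11 by simp
qed

lemma run_inv:
  fixes T :: "box \<Rightarrow> 'a::linorder"
  assumes ss: "ssyt n k lam mu T" and mi: "multi_input n k mu S"
  shows "INV (fm_run n k lam mu T S r0 i)"
proof (induction i)
  case 0 thus ?case using init_inv[OF ss mi] by (simp add: fm_run_def)
next
  case (Suc i) thus ?case using step_pres by (simp add: fm_run_def)
qed


lemma route_mem:
  assumes "(pt, tt) \<in> set (route n k L P)"
  shows "\<exists>tag q. tt < length L \<and> L ! tt = (tag, q) \<and> proj n k tag = proj n k P \<and>
     pt = (fst q + fst P - fst tag, snd q + snd P - snd tag)"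
proof -
  obtain t tag q where m: "(t, tag, q) \<in> set (zip [0..<length L] L)" "proj n k tag = proj n k P"
    "(pt, tt) = ((fst q + fst P - fst tag, snd q + snd P - snd tag), t)"
    using assms unfolding route_def by auto
  from m(1) obtain j where "j < length L" "t = j" "(tag, q) = L ! j" by (auto simp: set_zip)
  hence "tt < length L \<and> L ! tt = (tag, q) \<and> proj n k tag = proj n k P \<and>
     pt = (fst q + fst P - fst tag, snd q + snd P - snd tag)" using m by auto
  thus ?thesis by blast
qed

lemma tag_rel:
  assumes "proj n k tag = proj n k P"
  shows "fst tag = fst P + ((fst tag - fst P) div kk) * kk \<and> snd P = snd tag + ((fst tag - fst P) div kk) * dd"
proof -
  have "P \<in> proj n k tag" using assms proj_self by metis
  hence "cg (fst P) (fst tag) \<and> snd P = cs (fst P) tag" using mem_proj[of "fst P" "snd P" tag] by simp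
  thus ?thesis using cg_div[of "fst P" "fst tag"] by (simp add: cs_def)
qed

lemma main_loc:
  fixes T :: "box \<Rightarrow> 'a::linorder"
  assumes ss: "ssyt n k lam mu T" and mi: "multi_input n k mu S"
    and PQ: "pt_less P Q"
    and G: "(pG, tG) \<in> set (route n k (st_log (fm_run n k lam mu T S r0 i)) P)" and rG: "fst pG = r"
    and H: "(pH, tH) \<in> set (route n k (st_log (fm_run n k lam mu T S r0 i)) Q)" and rH: "fst pH = r"
  shows "snd pH < snd pG \<and> tH < tG"
proof -
  define \<sigma> where "\<sigma> = fm_run n k lam mu T S r0 i"
  define L where "L = st_log \<sigma>"
  have I: "INV \<sigma>" using run_inv[OF ss mi] \<sigma>_def by simp
  have j8: "sorted_wrt (<) (map keyL L)" using I unfolding INV_def J8_def L_def by (simp add: sorted_wrt_append)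
  have j13: "J13 \<sigma>" and j14: "J14 \<sigma>" using I unfolding INV_def by simp_all
  obtain tagG qG where g: "tG < length L" "L ! tG = (tagG, qG)" "proj n k tagG = proj n k P"
    "pG = (fst qG + fst P - fst tagG, snd qG + snd P - snd tagG)" using route_mem[OF G] L_def \<sigma>_def by blast
  obtain tagH qH where h: "tH < length L" "L ! tH = (tagH, qH)" "proj n k tagH = proj n k Q"
    "pH = (fst qH + fst Q - fst tagH, snd qH + snd Q - snd tagH)" using route_mem[OF H] L_def \<sigma>_def by blast
  define jG where "jG = (fst tagG - fst P) div kk"
  define jH where "jH = (fst tagH - fst Q) div kk"
  have tg: "fst tagG = fst P + jG * kk" "snd P = snd tagG + jG * dd" using tag_rel[OF g(3)] jG_def by simp_all
  have th: "fst tagH = fst Q + jH * kk" "snd Q = snd tagH + jH * dd" using tag_rel[OF h(3)] jH_def by simp_all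
  have wG: "win tagG" using j14 g(1,2) nth_mem[OF g(1)] unfolding J14_def L_def by force
  have wH: "win tagH" using j14 h(1,2) nth_mem[OF h(1)] unfolding J14_def L_def by force
  have kG: "keyL (L ! tG) = (r - fst P, tagG)" using g rG by (simp add: keyL_def)
  have kH: "keyL (L ! tH) = (r - fst Q, tagH)" using h rH by (simp add: keyL_def)
  have klt: "keyL (L ! tH) < keyL (L ! tG)"
  proof -
    have pl: "(fst P < fst Q \<or> (fst P = fst Q \<and> snd P \<ge> snd Q)) \<and> P \<noteq> Q" using PQ by (simp add: pt_less_def)
    show ?thesis
    proof (cases "fst P < fst Q")
      case True thus ?thesis using kG kH by simp
    next
      case False
      hence e: "fst P = fst Q" and sq: "snd Q < snd P" using pl by (auto simp: prod_eq_iff)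
      have "cg (fst tagG) (fst tagH)"
      proof -
        have "fst tagH = fst tagG + (jH - jG) * kk" using tg th e by (simp add: algebra_simps)
        thus ?thesis using cg_ex by blast
      qed
      hence ft: "fst tagG = fst tagH" using win_cg[OF wG wH] by simp
      have "jG * kk = jH * kk" using ft tg th e by simp
      hence jj: "jG = jH" using kpos by simp
      have "snd tagH < snd tagG" using tg th jj sq by simp
      hence "tagH < tagG" using ft by (cases tagG, cases tagH) simp
      thus ?thesis using kG kH e by simp
    qed
  qed
  have tlt: "tH < tG"
  proof (rule ccontr)
    assume "\<not> tH < tG"
    hence "tG < tH \<or> tG = tH" by auto
    thus False
    proof
      assume "tG < tH"
      hence "keyL (L ! tG) < keyL (L ! tH)" using j8 h(1) unfolding sorted_wrt_iff_nth_less by simp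
      thus False using klt by simp
    next
      assume "tG = tH" thus False using klt by simp
    qed
  qed
  have "cg (fst qH) (fst qG) \<longrightarrow> cs (fst qG) qH < snd qG"
    using j13 tlt g(1,2) h(2) unfolding J13_def L_def[symmetric] sorted_wrt_iff_nth_less by force
  moreover have fq: "fst qG = fst qH + (jG - jH) * kk" using g(4) h(4) rG rH tg th by (simp add: algebra_simps)
  moreover hence "cg (fst qH) (fst qG)" using cg_ex by blast
  ultimately have "cs (fst qG) qH < snd qG" by simp
  moreover have "(fst qH - fst qG) div kk = jH - jG"
  proof -
    have "fst qH - fst qG = (jH - jG) * kk" using fq by (simp add: algebra_simps)
    thus ?thesis using kpos by simp
  qed
  ultimately have "snd qH + (jH - jG) * dd < snd qG" by (simp add: cs_def)
  hence "snd pH < snd pG" using g(4) h(4) tg th by (simp add: algebra_simps)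
  thus ?thesis using tlt by simp
qed

end

theorem mainTheorem12:
  fixes n k :: nat and lam mu :: "int \<Rightarrow> int" and T :: "box \<Rightarrow> 'a::linorder"
    and S :: "box set" and r0 :: int and i :: nat and P Q :: pt and r :: int
    and pG pH :: pt and tG tH :: nat
  assumes "1 \<le> k" and "k < n"
    and "ssyt n k lam mu T"
    and "multi_input n k mu S"
    and "proj n k P \<in> S" and "proj n k Q \<in> S"
    and "pt_less P Q"
    and "(pG, tG) \<in> set (route n k (st_log (fm_run n k lam mu T S r0 i)) P)" and "fst pG = r"
    and "(pH, tH) \<in> set (route n k (st_log (fm_run n k lam mu T S r0 i)) Q)" and "fst pH = r"
  shows "snd pH < snd pG \<and> tH < tG"
proof -
  interpret cy n k r0 using assms(1) by unfold_locales
  show ?thesis using main_loc[OF assms(3,4,7,8,9,10,11)] .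
qed

end
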